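(* Let $(p,q)$ be a piecewise elementary pair of partial isomorphisms of $\mathbb{QU}_{\prec}$ and suppose the triple $(p',q',w)$ liberates $p$ in $(p,q)$. Let $u$ be a reduced word that is either empty or of the form $u=t^nv$ ($n\neq0$, product reduced) such that $uw$ is reduced. Then there are partial isomorphisms $p''\supseteq p'$, $q''\supseteq q'$ of $\mathbb{QU}_{\prec}$ such that $(p'',q'',uw)$ liberates $p$ in $(p,q)$. The same holds with $p,q$ and $s,t$ interchanged (liberating $q$, with $u$ empty or $u=s^mv$, $m\ne0$).
   Context: $\mathbb{QU}_{\prec}$ is the Fraïssé limit of the class of finite ordered metric spaces (metric spaces with an arbitrary linear order) with rational distances; denote its linear order by $<$. A partial isomorphism of $\mathbb{QU}_{\prec}$ is an isometric order-preserving bijection $p$ between finite subsets $\mathrm{dom}(p),\mathrm{ran}(p)$; $p'\supseteq p$ means $p'$ extends $p$; intervals are taken with respect to $<$; $p|_I$ is the restriction of $p$ to $I\cap\mathrm{dom}(p)$; $\mathrm{Fix}(p)=\{c\in\mathrm{dom}(p):p(c)=c\}$. An open interval $(a,b)$ is $p$-increasing if $a,b\in\mathrm{dom}(p)$, $p(a)=a$, $p(b)=b$ and $p(c)>c$ for all $c\in\mathrm{dom}(p)\cap(a,b)$; $p$-decreasing likewise with $p(c)<c$; $p$-monotone means either. Writing $\mathrm{dom}(p)=\{a_0<\dots<a_n\}$, $p$ is informative if $p(a_0)=a_0$, $p(a_n)=a_n$ and there are indices $0=i_0<\dots<i_r=n$ with $p(a_{i_k})=a_{i_k}$ and each $(a_{i_k},a_{i_{k+1}})$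 $p$-monotone; then $\mathrm{Ess}(p)=(\mathrm{dom}(p)\cup\mathrm{ran}(p))\setminus\{a_0,a_n\}$. A pair $(p,q)$ is piecewise elementary if $p,q$ are informative, $\min\mathrm{dom}(p)=\min\mathrm{dom}(q)$ and $\max\mathrm{dom}(p)=\max\mathrm{dom}(q)$; it is elementary if moreover $\mathrm{Fix}(p)\cap\mathrm{Fix}(q)$ consists only of this min and max. Words: $F(s,t)$ free group; for reduced $w=t^{n_k}s^{m_k}\cdots t^{n_1}s^{m_1}$, $w(p,q)(c)=q^{n_k}p^{m_k}\cdots q^{n_1}p^{m_1}(c)$ when defined (rightmost letter acts first); "$w=t^nv$" means the product is reduced. Liberation for elementary pairs: a triple $(p',q',w)$ with $p'\supseteq p$, $q'\supseteq q$ partial isomorphisms and $w$ reduced liberates $p$ in $(p,q)$ if: (i) $p',q'$ are informative; (ii) $\min\mathrm{dom}(p')=\min\mathrm{dom}(p)$, $\min\mathrm{dom}(q')=\min\mathrm{dom}(q)$, $\max\mathrm{dom}(p')=\max\mathrm{dom}(p)$, $\max\mathrm{dom}(q')=\max\mathrm{dom}(q)$; (iii) $w=t^nv$ with $n\neq0$; (iv) $w(p',q')(c)$ is defined for all $c\in\mathrm{Ess}(p)\cup\mathrm{Ess}(q)$ and $w(p',q')(\min(\mathrm{Ess}(p)\cup\mathrm{Ess}(q)))>\max\mathrm{Ess}(p')$; (v) there is an open interval $J$ whose right endpoint is $\max\mathrm{dom}(q)$, with $w(p',q')(c)\in J$ for all $c\in\mathrm{Ess}(p)\cup\mathrm{Ess}(q)$,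 and $J$ is $q'$-increasing if $n>0$ and $q'$-decreasing if $n<0$. It liberates $q$ if the same holds with roles of $p,q$ and of $s,t$ interchanged. Liberation for piecewise elementary pairs: let $a_0<\dots<a_m$ enumerate $\mathrm{Fix}(p)\cap\mathrm{Fix}(q)$ and $I_j=[a_j,a_{j+1}]$; $(p',q',w)$ liberates $p$ [resp. $q$] in $(p,q)$ if the min/max conditions (ii) hold and for every $j<m$ the triple $(p'|_{I_j},q'|_{I_j},w)$ liberates $p|_{I_j}$ [resp. $q|_{I_j}$] in $(p|_{I_j},q|_{I_j})$. *)

theory Defs
  imports Main "HOL-Library.Countable_Set"
begin

text \<open>We work on a type 'a whose linear order is the order of the structure, with a
rational-valued distance d. QU_prec d says that (UNIV, <, d) is (up to isomorphism)
the Fraisse limit of finite ordered rational metric spaces: it is a countable ordered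
rational metric space with the one-point extension property.\<close>

definition rat_metric :: "('a \<Rightarrow> 'a \<Rightarrow> rat) \<Rightarrow> bool" where
  "rat_metric d \<longleftrightarrow>
     (\<forall>x y. d x y \<ge> 0) \<and> (\<forall>x y. d x y = 0 \<longleftrightarrow> x = y) \<and>
     (\<forall>x y. d x y = d y x) \<and> (\<forall>x y z. d x z \<le> d x y + d y z)"

definition extension_property :: "('a::linorder \<Rightarrow> 'a \<Rightarrow> rat) \<Rightarrow> bool" where
  "extension_property d \<longleftrightarrow>
     (\<forall>(A::'a set) (r::'a \<Rightarrow> rat) L.
        finite A \<and> L \<subseteq> A \<and> (\<forall>a\<in>L. \<forall>b\<in>A. b < a \<longrightarrow> b \<in> L) \<and>
        (\<forall>a\<in>A. r a > 0) \<and>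
        (\<forall>a\<in>A. \<forall>b\<in>A. d a b \<le> r a + r b \<and> r a \<le> d a b + r b)
        \<longrightarrow> (\<exists>x. x \<notin> A \<and> (\<forall>a\<in>A. d x a = r a \<and> (a < x \<longleftrightarrow> a \<in> L))))"

definition QU_prec :: "('a::linorder \<Rightarrow> 'a \<Rightarrow> rat) \<Rightarrow> bool" where
  "QU_prec d \<longleftrightarrow> countable (UNIV :: 'a set) \<and> rat_metric d \<and> extension_property d"

definition partial_iso :: "('a::linorder \<Rightarrow> 'a \<Rightarrow> rat) \<Rightarrow> ('a \<rightharpoonup> 'a) \<Rightarrow> bool" where
  "partial_iso d p \<longleftrightarrow> finite (dom p) \<and>
     (\<forall>x\<in>dom p. \<forall>y\<in>dom p. d (the (p x)) (the (p y)) = d x y \<and>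
                             (x < y \<longrightarrow> the (p x) < the (p y)))"

definition Fix :: "('a \<rightharpoonup> 'a) \<Rightarrow> 'a set" where
  "Fix p = {c \<in> dom p. p c = Some c}"

definition p_increasing :: "('a::linorder \<rightharpoonup> 'a) \<Rightarrow> 'a \<Rightarrow> 'a \<Rightarrow> bool" where
  "p_increasing p a b \<longleftrightarrow> a < b \<and> a \<in> dom p \<and> b \<in> dom p \<and> p a = Some a \<and> p b = Some b \<and>
     (\<forall>c \<in> dom p \<inter> {a<..<b}. c < the (p c))"

definition p_decreasing :: "('a::linorder \<rightharpoonup> 'a) \<Rightarrow> 'a \<Rightarrow> 'a \<Rightarrow> bool" where
  "p_decreasing p a b \<longleftrightarrow> a < b \<and> a \<in> dom p \<and> b \<in> dom p \<and> p a = Some a \<and> p b = Some b \<and>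
     (\<forall>c \<in> dom p \<inter> {a<..<b}. the (p c) < c)"

definition p_monotone :: "('a::linorder \<rightharpoonup> 'a) \<Rightarrow> 'a \<Rightarrow> 'a \<Rightarrow> bool" where
  "p_monotone p a b \<longleftrightarrow> p_increasing p a b \<or> p_decreasing p a b"

definition informative :: "('a::linorder \<rightharpoonup> 'a) \<Rightarrow> bool" where
  "informative p \<longleftrightarrow> finite (dom p) \<and> dom p \<noteq> {} \<and>
     p (Min (dom p)) = Some (Min (dom p)) \<and> p (Max (dom p)) = Some (Max (dom p)) \<and>
     (\<exists>F \<subseteq> Fix p. Min (dom p) \<in> F \<and> Max (dom p) \<in> F \<and>
        (\<forall>a\<in>F. \<forall>b\<in>F. a < b \<and> (\<forall>c\<in>F. \<not> (a < c \<and> c < b)) \<longrightarrow> p_monotone p a b))"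

definition Ess :: "('a::linorder \<rightharpoonup> 'a) \<Rightarrow> 'a set" where
  "Ess p = (dom p \<union> ran p) - {Min (dom p), Max (dom p)}"

definition pw_elementary :: "('a::linorder \<Rightarrow> 'a \<Rightarrow> rat) \<Rightarrow> ('a \<rightharpoonup> 'a) \<Rightarrow> ('a \<rightharpoonup> 'a) \<Rightarrow> bool" where
  "pw_elementary d p q \<longleftrightarrow> partial_iso d p \<and> partial_iso d q \<and> informative p \<and> informative q \<and>
     Min (dom p) = Min (dom q) \<and> Max (dom p) = Max (dom q)"

definition elementary :: "('a::linorder \<Rightarrow> 'a \<Rightarrow> rat) \<Rightarrow> ('a \<rightharpoonup> 'a) \<Rightarrow> ('a \<rightharpoonup> 'a) \<Rightarrow> bool" where
  "elementary d p q \<longleftrightarrow> pw_elementary d p q \<and> Fix p \<inter> Fix q = {Min (dom p), Max (dom p)}"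

text \<open>Words are lists of generators s, s^-1, t, t^-1; the head of the list is the
leftmost letter. The product of words is list append.\<close>
datatype gen = Gs | Gs_inv | Gt | Gt_inv

fun inv_gen :: "gen \<Rightarrow> gen" where
  "inv_gen Gs = Gs_inv" | "inv_gen Gs_inv = Gs" | "inv_gen Gt = Gt_inv" | "inv_gen Gt_inv = Gt"

fun swap_gen :: "gen \<Rightarrow> gen" where
  "swap_gen Gs = Gt" | "swap_gen Gs_inv = Gt_inv" | "swap_gen Gt = Gs" | "swap_gen Gt_inv = Gs_inv"

definition reduced :: "gen list \<Rightarrow> bool" where
  "reduced w \<longleftrightarrow> (\<forall>i. Suc i < length w \<longrightarrow> w ! Suc i \<noteq> inv_gen (w ! i))"

text \<open>w = t^n v (reduced, n /= 0): the leftmost letter is t or t^-1; n > 0 iff it is t.\<close>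
definition starts_with_t :: "gen list \<Rightarrow> bool" where
  "starts_with_t w \<longleftrightarrow> w \<noteq> [] \<and> (hd w = Gt \<or> hd w = Gt_inv)"

definition starts_with_s :: "gen list \<Rightarrow> bool" where
  "starts_with_s w \<longleftrightarrow> w \<noteq> [] \<and> (hd w = Gs \<or> hd w = Gs_inv)"

definition pinv :: "('a \<rightharpoonup> 'a) \<Rightarrow> ('a \<rightharpoonup> 'a)" where
  "pinv p = (\<lambda>y. if y \<in> ran p then Some (THE x. p x = Some y) else None)"

fun act :: "('a \<rightharpoonup> 'a) \<Rightarrow> ('a \<rightharpoonup> 'a) \<Rightarrow> gen \<Rightarrow> ('a \<rightharpoonup> 'a)" where
  "act p q Gs = p" | "act p q Gs_inv = pinv p" | "act p q Gt = q" | "act p q Gt_inv = pinv q"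

text \<open>w(p,q)(c): rightmost letter acts first; None = undefined.\<close>
fun eval_word :: "gen list \<Rightarrow> ('a \<rightharpoonup> 'a) \<Rightarrow> ('a \<rightharpoonup> 'a) \<Rightarrow> 'a \<Rightarrow> 'a option" where
  "eval_word [] p q c = Some c"
| "eval_word (g # w) p q c =
     (case eval_word w p q c of None \<Rightarrow> None | Some x \<Rightarrow> act p q g x)"

definition liberates_elem ::
  "('a::linorder \<Rightarrow> 'a \<Rightarrow> rat) \<Rightarrow> ('a \<rightharpoonup> 'a) \<Rightarrow> ('a \<rightharpoonup> 'a) \<Rightarrow> ('a \<rightharpoonup> 'a) \<Rightarrow> ('a \<rightharpoonup> 'a)
     \<Rightarrow> gen list \<Rightarrow> bool" where
  "liberates_elem d p q p' q' w \<longleftrightarrow>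
     partial_iso d p' \<and> partial_iso d q' \<and> p \<subseteq>\<^sub>m p' \<and> q \<subseteq>\<^sub>m q' \<and> reduced w \<and>
     \<comment> \<open>(i)\<close>
     informative p' \<and> informative q' \<and>
     \<comment> \<open>(ii)\<close>
     Min (dom p') = Min (dom p) \<and> Min (dom q') = Min (dom q) \<and>
     Max (dom p') = Max (dom p) \<and> Max (dom q') = Max (dom q) \<and>
     \<comment> \<open>(iii)\<close>
     starts_with_t w \<and>
     \<comment> \<open>(iv)\<close>
     (\<forall>c \<in> Ess p \<union> Ess q. eval_word w p' q' c \<noteq> None) \<and>
     (Ess p \<union> Ess q \<noteq> {} \<longrightarrow>
        (\<forall>x \<in> Ess p'. x < the (eval_word w p' q' (Min (Ess p \<union> Ess q))))) \<and>
     \<comment> \<open>(v)\<close>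
     (\<exists>a. (\<forall>c \<in> Ess p \<union> Ess q.
             a < the (eval_word w p' q' c) \<and> the (eval_word w p' q' c) < Max (dom q)) \<and>
          (if hd w = Gt then p_increasing q' a (Max (dom q))
           else p_decreasing q' a (Max (dom q))))"

definition liberates_p ::
  "('a::linorder \<Rightarrow> 'a \<Rightarrow> rat) \<Rightarrow> ('a \<rightharpoonup> 'a) \<Rightarrow> ('a \<rightharpoonup> 'a) \<Rightarrow> ('a \<rightharpoonup> 'a) \<Rightarrow> ('a \<rightharpoonup> 'a)
     \<Rightarrow> gen list \<Rightarrow> bool" where
  "liberates_p d p q p' q' w \<longleftrightarrow>
     partial_iso d p' \<and> partial_iso d q' \<and> p \<subseteq>\<^sub>m p' \<and> q \<subseteq>\<^sub>m q' \<and> reduced w \<and>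
     Min (dom p') = Min (dom p) \<and> Min (dom q') = Min (dom q) \<and>
     Max (dom p') = Max (dom p) \<and> Max (dom q') = Max (dom q) \<and>
     (\<forall>a b. a \<in> Fix p \<inter> Fix q \<and> b \<in> Fix p \<inter> Fix q \<and> a < b \<and>
            (\<forall>c \<in> Fix p \<inter> Fix q. \<not> (a < c \<and> c < b)) \<longrightarrow>
        liberates_elem d (p |` {a..b}) (q |` {a..b}) (p' |` {a..b}) (q' |` {a..b}) w)"

definition liberates_q ::
  "('a::linorder \<Rightarrow> 'a \<Rightarrow> rat) \<Rightarrow> ('a \<rightharpoonup> 'a) \<Rightarrow> ('a \<rightharpoonup> 'a) \<Rightarrow> ('a \<rightharpoonup> 'a) \<Rightarrow> ('a \<rightharpoonup> 'a)
     \<Rightarrow> gen list \<Rightarrow> bool" where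
  "liberates_q d p q p' q' w \<longleftrightarrow> liberates_p d q p q' p' (map swap_gen w)"

end

theory Submission
  imports Defs "HOL-Library.Countable_Set"
begin


lemma rm_facts:
  assumes "rat_metric d"
  shows "d x y \<ge> 0" "d x x = 0" "d x y = d y x" "d x z \<le> d x y + d y z"
    "d x y = 0 \<longleftrightarrow> x = y"
  using assms unfolding rat_metric_def by auto

lemma core_point:
  fixes d :: "'a::linorder \<Rightarrow> 'a \<Rightarrow> rat"
  assumes QU: "QU_prec d" and fA: "finite A" and BA: "B \<subseteq> A" and Bne: "B \<noteq> {}"
    and fpos: "\<forall>b\<in>B. f b > 0"
    and kat: "\<forall>b\<in>B. \<forall>b'\<in>B. d b b' \<le> f b + f b' \<and> f b \<le> d b b' + f b'"
  shows "\<exists>y. y \<notin> A \<and> (\<forall>b\<in>B. d y b = f b) \<and> (\<forall>v\<in>A. v < y \<longleftrightarrow> (\<exists>t\<in>Low. v \<le> t))"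
proof -
  have rm: "rat_metric d" and ext: "extension_property d" using QU unfolding QU_prec_def by auto
  have fB: "finite B" using fA BA finite_subset by blast
  define r where "r v = Min ((\<lambda>b. d v b + f b) ` B)" for v
  have rle: "r v \<le> d v b + f b" if "b \<in> B" for v b
    unfolding r_def using fB that by (intro Min_le) auto
  have rex: "\<exists>b\<in>B. r v = d v b + f b" for v
  proof -
    have "r v \<in> (\<lambda>b. d v b + f b) ` B" unfolding r_def using fB Bne by (intro Min_in) auto
    then show ?thesis by auto
  qed
  have rpos: "r v > 0" for v
  proof -
    obtain b where "b\<in>B" "r v = d v b + f b" using rex by blast
    then show ?thesis using fpos rm_facts(1)[OF rm, of v b] by (simp add: add_nonneg_pos)
  qed
  have rB: "r b = f b" if "b \<in> B" for b
  proof -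
    have "r b \<le> f b" using rle[OF that, of b] rm_facts(2)[OF rm] by simp
    moreover obtain b' where "b' \<in> B" "r b = d b b' + f b'" using rex by blast
    moreover have "f b \<le> d b b' + f b'" using kat that \<open>b' \<in> B\<close> by blast
    ultimately show ?thesis by simp
  qed
  have k1: "d v w \<le> r v + r w" for v w
  proof -
    obtain bv where bv: "bv \<in> B" "r v = d v bv + f bv" using rex by blast
    obtain bw where bw: "bw \<in> B" "r w = d w bw + f bw" using rex by blast
    have "d v w \<le> d v bv + d bv w" using rm_facts(4)[OF rm] .
    also have "d bv w \<le> d bv bw + d bw w" using rm_facts(4)[OF rm] .
    also have "d bv bw \<le> f bv + f bw" using kat bv bw by blast
    finally show ?thesis using bv bw rm_facts(3)[OF rm, of bw w] by simp
  qed
  have k2: "r v \<le> d v w + r w" for v w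
  proof -
    obtain bw where bw: "bw \<in> B" "r w = d w bw + f bw" using rex by blast
    have "r v \<le> d v bw + f bw" using rle bw by blast
    also have "d v bw \<le> d v w + d w bw" using rm_facts(4)[OF rm] .
    finally show ?thesis using bw by simp
  qed
  define L where "L = {v\<in>A. \<exists>t\<in>Low. v \<le> t}"
  have "\<exists>x. x \<notin> A \<and> (\<forall>a\<in>A. d x a = r a \<and> (a < x \<longleftrightarrow> a \<in> L))"
  proof -
    have "finite A \<and> L \<subseteq> A \<and> (\<forall>a\<in>L. \<forall>b\<in>A. b < a \<longrightarrow> b \<in> L) \<and>
        (\<forall>a\<in>A. r a > 0) \<and> (\<forall>a\<in>A. \<forall>b\<in>A. d a b \<le> r a + r b \<and> r a \<le> d a b + r b)"
      using fA k1 k2 rpos unfolding L_def by (auto, metis less_imp_le order.trans)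
    then show ?thesis using ext unfolding extension_property_def by blast
  qed
  then obtain x where x: "x \<notin> A" "\<forall>a\<in>A. d x a = r a \<and> (a < x \<longleftrightarrow> a \<in> L)" by blast
  show ?thesis
    apply (rule exI[of _ x])
    using x BA rB unfolding L_def by auto
qed




lemma piso_D:
  assumes "partial_iso d R" "R z = Some w" "R z' = Some w'"
  shows "d w w' = d z z'" "z < z' \<Longrightarrow> w < w'"
proof -
  have "z \<in> dom R" "z' \<in> dom R" using assms by auto
  then have h: "d (the (R z)) (the (R z')) = d z z' \<and> (z < z' \<longrightarrow> the (R z) < the (R z'))"
    using assms(1) unfolding partial_iso_def by blast
  then show "d w w' = d z z'" "z < z' \<Longrightarrow> w < w'" using assms by auto
qed

lemma piso_fin: "partial_iso d R \<Longrightarrow> finite (dom R)"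
  unfolding partial_iso_def by auto

lemma piso_mono_iff:
  fixes R :: "'a::linorder \<rightharpoonup> 'a"
  assumes "partial_iso d R" "R z = Some w" "R z' = Some w'"
  shows "z < z' \<longleftrightarrow> w < w'" "z \<le> z' \<longleftrightarrow> w \<le> w'" "z = z' \<longleftrightarrow> w = w'"
proof -
  have a: "z < z' \<Longrightarrow> w < w'" "z' < z \<Longrightarrow> w' < w" using piso_D(2) assms by metis+
  have e: "z = z' \<Longrightarrow> w = w'" using assms by simp
  show "z < z' \<longleftrightarrow> w < w'"
  proof
    assume "w < w'" then show "z < z'" using a e by (cases z z' rule: linorder_cases) auto
  qed (rule a(1))
  show "z \<le> z' \<longleftrightarrow> w \<le> w'" using a e by (cases z z' rule: linorder_cases) auto
  show "z = z' \<longleftrightarrow> w = w'"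
  proof
    assume "z = z'" then show "w = w'" using assms by simp
  next
    assume "w = w'" then show "z = z'" using a by (metis less_irrefl linorder_neqE)
  qed
qed

lemma pinv_iff:
  fixes R :: "'a::linorder \<rightharpoonup> 'a"
  assumes "partial_iso d R"
  shows "pinv R y = Some x \<longleftrightarrow> R x = Some y"
proof
  assume h: "pinv R y = Some x"
  then have "y \<in> ran R" unfolding pinv_def by (auto split: if_splits)
  then obtain x0 where x0: "R x0 = Some y" unfolding ran_def by auto
  have "(THE x. R x = Some y) = x0"
    using x0 piso_mono_iff(3)[OF assms x0] by (intro the_equality) auto
  then show "R x = Some y" using h x0 \<open>y \<in> ran R\<close> unfolding pinv_def by auto
next
  assume h: "R x = Some y"
  then have "y \<in> ran R" by (auto simp: ran_def)
  have "(THE x'. R x' = Some y) = x"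
    using h piso_mono_iff(3)[OF assms h] by (intro the_equality) auto
  then show "pinv R y = Some x" using \<open>y \<in> ran R\<close> unfolding pinv_def by auto
qed

lemma piso_upd:
  fixes R :: "'a::linorder \<rightharpoonup> 'a"
  assumes rm: "rat_metric d" and pi: "partial_iso d R" and nx: "x \<notin> dom R"
    and c: "\<forall>z w. R z = Some w \<longrightarrow> d y w = d x z \<and> (z < x \<longrightarrow> w < y) \<and> (x < z \<longrightarrow> y < w)"
  shows "partial_iso d (R(x \<mapsto> y))"
  unfolding partial_iso_def
proof (rule conjI)
  show "finite (dom (R(x \<mapsto> y)))" using piso_fin[OF pi] by simp
next
  show "\<forall>a\<in>dom (R(x \<mapsto> y)). \<forall>b\<in>dom (R(x \<mapsto> y)). d (the ((R(x \<mapsto> y)) a)) (the ((R(x \<mapsto> y)) b)) = d a b \<and>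
         (a < b \<longrightarrow> the ((R(x \<mapsto> y)) a) < the ((R(x \<mapsto> y)) b))"
  proof (intro ballI)
  fix a b assume a: "a \<in> dom (R(x \<mapsto> y))" and b: "b \<in> dom (R(x \<mapsto> y))"
  show "d (the ((R(x \<mapsto> y)) a)) (the ((R(x \<mapsto> y)) b)) = d a b \<and>
         (a < b \<longrightarrow> the ((R(x \<mapsto> y)) a) < the ((R(x \<mapsto> y)) b))"
  proof (cases "a = x")
    case True
    show ?thesis
    proof (cases "b = x")
      case True then show ?thesis using \<open>a = x\<close> rm_facts(2)[OF rm] by simp
    next
      case False
      then obtain w where w: "R b = Some w" using b by auto
      then show ?thesis using c True False by auto
    qed
  next
    case False
    then obtain wa where wa: "R a = Some wa" using a by auto
    show ?thesis
    proof (cases "b = x")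
      case True
      then show ?thesis using c wa False rm_facts(3)[OF rm] by auto
    next
      case False
      then obtain wb where wb: "R b = Some wb" using b by auto
      then show ?thesis using wa \<open>a \<noteq> x\<close> False piso_D[OF pi wa wb] by auto
    qed
  qed
  qed
qed

lemma fwd:
  fixes d :: "'a::linorder \<Rightarrow> 'a \<Rightarrow> rat"
  assumes QU: "QU_prec d" and pi: "partial_iso d R" and nx: "x \<notin> dom R"
    and rne: "ran R \<noteq> {}" and fL: "finite Low"
    and c: "\<forall>z w. R z = Some w \<and> x < z \<longrightarrow> (\<forall>t\<in>Low. t < w)"
  shows "\<exists>y. partial_iso d (R(x \<mapsto> y)) \<and> (\<forall>t\<in>Low. t < y)"
proof -
  have rm: "rat_metric d" using QU unfolding QU_prec_def by auto
  define Low' where "Low' = Low \<union> {w. \<exists>z. R z = Some w \<and> z < x}"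
  define A where "A = ran R \<union> Low'"
  define f where "f b = d x (the (pinv R b))" for b
  have fr: "finite (ran R)" using piso_fin[OF pi] finite_ran by blast
  have fLow': "finite Low'" unfolding Low'_def
    using fL by (rule finite_UnI) (rule finite_subset[OF _ fr], auto simp: ran_def)
  have fA: "finite A" unfolding A_def using fr fLow' by auto
  have fv: "f w = d x z" if "R z = Some w" for z w
  proof -
    have "pinv R w = Some z" using pinv_iff[OF pi] that by simp
    then show ?thesis unfolding f_def by simp
  qed
  have "\<exists>y. y \<notin> A \<and> (\<forall>b\<in>ran R. d y b = f b) \<and> (\<forall>v\<in>A. v < y \<longleftrightarrow> (\<exists>t\<in>Low'. v \<le> t))"
  proof (rule core_point[OF QU fA _ rne])
    show "ran R \<subseteq> A" unfolding A_def by auto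
    show "\<forall>b\<in>ran R. 0 < f b"
    proof
      fix b assume "b \<in> ran R"
      then obtain z where z: "R z = Some b" by (auto simp: ran_def)
      then have "z \<noteq> x" using nx by auto
      then show "0 < f b" using fv[OF z] rm_facts(1,5)[OF rm, of x z] by auto
    qed
    show "\<forall>b\<in>ran R. \<forall>b'\<in>ran R. d b b' \<le> f b + f b' \<and> f b \<le> d b b' + f b'"
    proof (intro ballI)
      fix b b' assume "b \<in> ran R" "b' \<in> ran R"
      then obtain z z' where z: "R z = Some b" and z': "R z' = Some b'" by (auto simp: ran_def)
      show "d b b' \<le> f b + f b' \<and> f b \<le> d b b' + f b'"
      proof -
        have "d z z' \<le> d z x + d x z'" "d x z \<le> d x z' + d z' z" "d z x = d x z" "d z' z = d z z'"
          using rm_facts(3,4)[OF rm] by blast+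
        then show ?thesis using piso_D(1)[OF pi z z'] fv[OF z] fv[OF z'] by simp
      qed
    qed
  qed
  then obtain y where y: "y \<notin> A" "\<forall>b\<in>ran R. d y b = f b" "\<forall>v\<in>A. v < y \<longleftrightarrow> (\<exists>t\<in>Low'. v \<le> t)"
    by blast
  have upd: "partial_iso d (R(x \<mapsto> y))"
  proof (rule piso_upd[OF rm pi nx], intro allI impI conjI)
    fix z w assume z: "R z = Some w"
    have wA: "w \<in> A" using z unfolding A_def by (auto simp: ran_def)
    show "d y w = d x z" using y(2) z fv[OF z] by (auto simp: ran_def)
    show "z < x \<Longrightarrow> w < y" using y(3) wA z unfolding Low'_def by auto
    show "y < w" if "x < z"
    proof -
      have "\<not> w < y"
      proof
        assume "w < y"
        then obtain t where t: "t \<in> Low'" "w \<le> t" using y(3) wA by blast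
        show False
        proof (cases "t \<in> Low")
          case True
          have "t < w" using c z that True by blast
          then show False using t(2) by auto
        next
          case False
          then obtain z2 where z2: "R z2 = Some t" "z2 < x" using t(1) unfolding Low'_def by auto
          have "t < w" using piso_D(2)[OF pi z2(1) z] z2(2) that by auto
          then show False using t(2) by auto
        qed
      qed
      moreover have "w \<noteq> y" using y(1) wA by auto
      ultimately show ?thesis by auto
    qed
  qed
  have "\<forall>t\<in>Low. t < y" using y(3) unfolding A_def Low'_def by auto
  then show ?thesis using upd by blast
qed

lemma bwd:
  fixes d :: "'a::linorder \<Rightarrow> 'a \<Rightarrow> rat"
  assumes QU: "QU_prec d" and pi: "partial_iso d R" and nx: "x \<notin> ran R"
    and dne: "dom R \<noteq> {}" and fL: "finite Low"
    and c: "\<forall>z w. R z = Some w \<and> x < w \<longrightarrow> (\<forall>t\<in>Low. t < z)"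
  shows "\<exists>z0. z0 \<notin> dom R \<and> partial_iso d (R(z0 \<mapsto> x)) \<and> (\<forall>t\<in>Low. t < z0)"
proof -
  have rm: "rat_metric d" using QU unfolding QU_prec_def by auto
  define Low' where "Low' = Low \<union> {z. \<exists>w. R z = Some w \<and> w < x}"
  define A where "A = dom R \<union> Low'"
  define f where "f z = d x (the (R z))" for z
  have fd: "finite (dom R)" using piso_fin[OF pi] .
  have fLow': "finite Low'" unfolding Low'_def
    using fL by (rule finite_UnI) (rule finite_subset[OF _ fd], auto)
  have fA: "finite A" unfolding A_def using fd fLow' by auto
  have fv: "f z = d x w" if "R z = Some w" for z w
    using that unfolding f_def by simp
  have "\<exists>y. y \<notin> A \<and> (\<forall>b\<in>dom R. d y b = f b) \<and> (\<forall>v\<in>A. v < y \<longleftrightarrow> (\<exists>t\<in>Low'. v \<le> t))"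
  proof (rule core_point[OF QU fA _ dne])
    show "dom R \<subseteq> A" unfolding A_def by auto
    show "\<forall>b\<in>dom R. 0 < f b"
    proof
      fix b assume "b \<in> dom R"
      then obtain w where z: "R b = Some w" by auto
      then have "w \<noteq> x" using nx by (auto simp: ran_def)
      then show "0 < f b" using fv[OF z] rm_facts(1,5)[OF rm, of x w] by auto
    qed
    show "\<forall>b\<in>dom R. \<forall>b'\<in>dom R. d b b' \<le> f b + f b' \<and> f b \<le> d b b' + f b'"
    proof (intro ballI)
      fix b b' assume "b \<in> dom R" "b' \<in> dom R"
      then obtain z z' where z: "R b = Some z" and z': "R b' = Some z'" by auto
      show "d b b' \<le> f b + f b' \<and> f b \<le> d b b' + f b'"
      proof -
        have "d z z' \<le> d z x + d x z'" "d x z \<le> d x z' + d z' z" "d z x = d x z" "d z' z = d z z'"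
          using rm_facts(3,4)[OF rm] by blast+
        then show ?thesis using piso_D(1)[OF pi z z'] fv[OF z] fv[OF z'] by simp
      qed
    qed
  qed
  then obtain y where y: "y \<notin> A" "\<forall>b\<in>dom R. d y b = f b" "\<forall>v\<in>A. v < y \<longleftrightarrow> (\<exists>t\<in>Low'. v \<le> t)"
    by blast
  have ny: "y \<notin> dom R" using y(1) unfolding A_def by auto
  have upd: "partial_iso d (R(y \<mapsto> x))"
  proof (rule piso_upd[OF rm pi ny], intro allI impI conjI)
    fix z w assume z: "R z = Some w"
    have zA: "z \<in> A" using z unfolding A_def by auto
    have "z \<in> dom R" using z by auto
    then show "d x w = d y z" using y(2) fv[OF z] by auto
    show "w < x" if zy: "z < y"
    proof -
      have "z < y \<longleftrightarrow> (\<exists>t\<in>Low'. z \<le> t)" using y(3) zA by (rule bspec)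
      then obtain t where t: "t \<in> Low'" "z \<le> t" using zy by blast
      have "\<not> x < w"
      proof
        assume xw: "x < w"
        show False
        proof (cases "t \<in> Low")
          case True
          have "t < z" using c z xw True by blast
          then show False using t(2) by auto
        next
          case False
          then obtain w2 where w2: "R t = Some w2" "w2 < x" using t(1) unfolding Low'_def by auto
          have "w \<le> w2" using piso_mono_iff(2)[OF pi z w2(1)] t(2) by auto
          then show False using xw w2(2) by auto
        qed
      qed
      moreover have "w \<noteq> x" using nx z by (auto simp: ran_def)
      ultimately show ?thesis by auto
    qed
    show "x < w" if "y < z"
    proof -
      have "\<not> w < x"
      proof
        assume "w < x"
        then have "z \<in> Low'" unfolding Low'_def using z by auto
        then have "z < y" using y(3) zA by auto
        then show False using that by auto
      qed
      moreover have "w \<noteq> x" using nx z by (auto simp: ran_def)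
      ultimately show ?thesis by auto
    qed
  qed
  have "\<forall>t\<in>Low. t < y" using y(3) unfolding A_def Low'_def by auto
  then show ?thesis using upd ny by blast
qed

lemma fixpt:
  fixes d :: "'a::linorder \<Rightarrow> 'a \<Rightarrow> rat"
  assumes QU: "QU_prec d" and pi: "partial_iso d N" and fA: "finite A"
    and dA: "dom N \<subseteq> A" and rA: "ran N \<subseteq> A" and Ane: "A \<noteq> {}"
    and c: "\<forall>z w. N z = Some w \<longrightarrow> ((\<exists>t\<in>Low. z \<le> t) \<longleftrightarrow> (\<exists>t\<in>Low. w \<le> t))"
  shows "\<exists>f. f \<notin> A \<and> partial_iso d (N(f \<mapsto> f)) \<and> (\<forall>v\<in>A. v < f \<longleftrightarrow> (\<exists>t\<in>Low. v \<le> t))"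
proof -
  have rm: "rat_metric d" using QU unfolding QU_prec_def by auto
  define K where "K = 1 + Max ((\<lambda>(a,b). d a b) ` (A \<times> A))"
  have dK: "d a b < K" if "a \<in> A" "b \<in> A" for a b
  proof -
    have "d a b \<le> Max ((\<lambda>(a,b). d a b) ` (A \<times> A))"
      using fA that by (intro Max_ge) auto
    then show ?thesis unfolding K_def by simp
  qed
  have Kpos: "K > 0"
  proof -
    obtain a where "a \<in> A" using Ane by auto
    then show ?thesis using dK[of a a] rm_facts(1)[OF rm, of a a] by auto
  qed
  have "\<exists>y. y \<notin> A \<and> (\<forall>b\<in>A. d y b = (\<lambda>_. K) b) \<and> (\<forall>v\<in>A. v < y \<longleftrightarrow> (\<exists>t\<in>Low. v \<le> t))"
  proof (rule core_point[OF QU fA _ Ane])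
    show "A \<subseteq> A" by simp
    show "\<forall>b\<in>A. 0 < K" using Kpos by simp
    show "\<forall>b\<in>A. \<forall>b'\<in>A. d b b' \<le> K + K \<and> K \<le> d b b' + K"
    proof (intro ballI conjI)
      fix b b' assume "b \<in> A" "b' \<in> A"
      then have "d b b' < K" "0 \<le> d b b'" using dK rm_facts(1)[OF rm] by auto
      then show "d b b' \<le> K + K" "K \<le> d b b' + K" using Kpos by auto
    qed
  qed
  then obtain y where y: "y \<notin> A" "\<forall>b\<in>A. d y b = K" "\<forall>v\<in>A. v < y \<longleftrightarrow> (\<exists>t\<in>Low. v \<le> t)"
    by blast
  have ny: "y \<notin> dom N" using y(1) dA by auto
  have upd: "partial_iso d (N(y \<mapsto> y))"
  proof (rule piso_upd[OF rm pi ny], intro allI impI conjI)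
    fix z w assume z: "N z = Some w"
    have zA: "z \<in> A" and wA: "w \<in> A" using z dA rA by (auto simp: ran_def)
    show "d y w = d y z" using y(2) zA wA by simp
    show "w < y" if "z < y" using that y(3) zA wA c z by auto
    show "y < w" if "y < z"
    proof -
      have "\<not> z < y" using that by auto
      then have "\<not> w < y" using y(3) zA wA c z by auto
      moreover have "w \<noteq> y" using y(1) wA by auto
      ultimately show ?thesis by auto
    qed
  qed
  then show ?thesis using y by blast
qed




definition ptsI :: "'a::linorder \<Rightarrow> 'a \<Rightarrow> ('a \<rightharpoonup> 'a) \<Rightarrow> 'a set" where
  "ptsI a0 b0 m = (dom m \<union> ran m) \<inter> {a0<..<b0}"

definition infU :: "'a::linorder \<Rightarrow> ('a \<rightharpoonup> 'a) \<Rightarrow> 'a \<Rightarrow> bool" where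
  "infU a0 m a \<longleftrightarrow> (\<exists>F \<subseteq> Fix m. (\<forall>x\<in>F. a0 \<le> x \<and> x \<le> a) \<and> a0 \<in> F \<and> a \<in> F \<and>
     (\<forall>\<alpha>\<in>F. \<forall>\<beta>\<in>F. \<alpha> < \<beta> \<and> (\<forall>c\<in>F. \<not> (\<alpha> < c \<and> c < \<beta>)) \<longrightarrow> p_monotone m \<alpha> \<beta>))"

lemma pinv_mono_map:
  assumes "partial_iso d P" "partial_iso d P'" "P \<subseteq>\<^sub>m P'" "pinv P x = Some z"
  shows "pinv P' x = Some z"
proof -
  have "P z = Some x" using pinv_iff[OF assms(1)] assms(4) by simp
  then have "P' z = Some x" using assms(3) by (auto simp: map_le_def dom_def)
  then show ?thesis using pinv_iff[OF assms(2)] by simp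
qed

lemma map_le_apply: "P \<subseteq>\<^sub>m P' \<Longrightarrow> P x = Some z \<Longrightarrow> P' x = Some z"
  by (auto simp: map_le_def dom_def)

lemma eval_mono_map:
  assumes "partial_iso d P" "partial_iso d P'" "partial_iso d Q" "partial_iso d Q'"
    "P \<subseteq>\<^sub>m P'" "Q \<subseteq>\<^sub>m Q'"
  shows "eval_word W P Q c = Some y \<Longrightarrow> eval_word W P' Q' c = Some y"
proof (induction W arbitrary: y)
  case Nil then show ?case by simp
next
  case (Cons g W)
  then obtain x where x: "eval_word W P Q c = Some x" "act P Q g x = Some y"
    by (auto split: option.splits)
  have "eval_word W P' Q' c = Some x" using Cons.IH x(1) .
  moreover have "act P' Q' g x = Some y"
    using x(2) assms pinv_mono_map map_le_apply by (cases g) auto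
  ultimately show ?case by simp
qed

lemma act_order:
  assumes "partial_iso d P" "partial_iso d Q" "act P Q g x = Some y" "act P Q g x' = Some y'" "x < x'"
  shows "y < y'"
proof (cases g)
  case Gs then show ?thesis using assms piso_D(2)[OF assms(1)] by auto
next
  case Gt then show ?thesis using assms piso_D(2)[OF assms(2)] by auto
next
  case Gs_inv
  then have "P y = Some x" "P y' = Some x'" using assms pinv_iff[OF assms(1)] by auto
  then show ?thesis using piso_mono_iff(1)[OF assms(1)] assms(5) by blast
next
  case Gt_inv
  then have "Q y = Some x" "Q y' = Some x'" using assms pinv_iff[OF assms(2)] by auto
  then show ?thesis using piso_mono_iff(1)[OF assms(2)] assms(5) by blast
qed

lemma eval_order:
  assumes "partial_iso d P" "partial_iso d Q"
  shows "eval_word W P Q c = Some y \<Longrightarrow> eval_word W P Q c' = Some y' \<Longrightarrow> c < c' \<Longrightarrow> y < y'"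
proof (induction W arbitrary: y y')
  case Nil then show ?case by simp
next
  case (Cons g W)
  then obtain x where x: "eval_word W P Q c = Some x" "act P Q g x = Some y"
    by (auto split: option.splits)
  from Cons obtain x' where x': "eval_word W P Q c' = Some x'" "act P Q g x' = Some y'"
    by (auto split: option.splits)
  have "x < x'" using Cons.IH x(1) x'(1) Cons.prems(3) by blast
  then show ?case using act_order[OF assms x(2) x'(2)] by blast
qed

lemma eval_order_le:
  assumes "partial_iso d P" "partial_iso d Q"
    "eval_word W P Q c = Some y" "eval_word W P Q c' = Some y'" "c \<le> c'"
  shows "y \<le> y'"
proof (cases "c = c'")
  case True then show ?thesis using assms(3,4) by simp
next
  case False then have "c < c'" using assms(5) by simp
  then show ?thesis using eval_order[OF assms(1,2,3,4)] by simp
qed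

section \<open>Restriction to an interval\<close>

lemma piso_restrict:
  assumes "partial_iso d m" shows "partial_iso d (m |` S)"
proof -
  have "dom (m |` S) = dom m \<inter> S" by simp
  moreover have "finite (dom m \<inter> S)" using assms unfolding partial_iso_def by auto
  ultimately show ?thesis using assms unfolding partial_iso_def by (auto simp: restrict_map_def)
qed

locale ival =
  fixes d :: "'a::linorder \<Rightarrow> 'a \<Rightarrow> rat" and a0 b0 :: 'a
  assumes ab: "a0 < b0"
begin

definition "fx m \<longleftrightarrow> partial_iso d m \<and> m a0 = Some a0 \<and> m b0 = Some b0"

lemma fx_in:
  assumes "fx m" "m x = Some y"
  shows "a0 \<le> x \<longleftrightarrow> a0 \<le> y" "x \<le> b0 \<longleftrightarrow> y \<le> b0" "a0 < x \<longleftrightarrow> a0 < y" "x < b0 \<longleftrightarrow> y < b0"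
proof -
  have pm: "partial_iso d m" "m a0 = Some a0" "m b0 = Some b0" using assms(1) unfolding fx_def by auto
  show "a0 \<le> x \<longleftrightarrow> a0 \<le> y" by (rule piso_mono_iff(2)[OF pm(1) pm(2) assms(2)])
  show "x \<le> b0 \<longleftrightarrow> y \<le> b0" by (rule piso_mono_iff(2)[OF pm(1) assms(2) pm(3)])
  show "a0 < x \<longleftrightarrow> a0 < y" by (rule piso_mono_iff(1)[OF pm(1) pm(2) assms(2)])
  show "x < b0 \<longleftrightarrow> y < b0" by (rule piso_mono_iff(1)[OF pm(1) assms(2) pm(3)])
qed

lemma restr_dom: "dom (m |` {a0..b0}) = dom m \<inter> {a0..b0}"
  by auto

lemma restr_MinMax:
  assumes "fx m"
  shows "Min (dom (m |` {a0..b0})) = a0" "Max (dom (m |` {a0..b0})) = b0"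
proof -
  have f: "finite (dom (m |` {a0..b0}))" using assms unfolding fx_def partial_iso_def by auto
  have i: "a0 \<in> dom (m |` {a0..b0})" "b0 \<in> dom (m |` {a0..b0})" using assms ab unfolding fx_def by auto
  show "Min (dom (m |` {a0..b0})) = a0" using f i by (intro Min_eqI) auto
  show "Max (dom (m |` {a0..b0})) = b0" using f i by (intro Max_eqI) auto
qed

lemma restr_Ess:
  assumes "fx m"
  shows "Ess (m |` {a0..b0}) = ptsI a0 b0 m"
proof -
  have "(dom (m |` {a0..b0}) \<union> ran (m |` {a0..b0})) - {a0, b0} = (dom m \<union> ran m) \<inter> {a0<..<b0}"
  proof (intro equalityI subsetI)
    fix v assume v: "v \<in> (dom (m |` {a0..b0}) \<union> ran (m |` {a0..b0})) - {a0, b0}"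
    then show "v \<in> (dom m \<union> ran m) \<inter> {a0<..<b0}"
    proof (cases "v \<in> dom (m |` {a0..b0})")
      case True then show ?thesis using v by auto
    next
      case False
      then obtain x where x: "(m |` {a0..b0}) x = Some v" using v by (auto simp: ran_def)
      then have "x \<in> {a0..b0}" "m x = Some v" by (auto simp: restrict_map_def split: if_splits)
      then have "v \<in> {a0..b0}" using fx_in[OF assms] by auto
      then show ?thesis using v \<open>m x = Some v\<close> by (auto simp: ran_def)
    qed
  next
    fix v assume v: "v \<in> (dom m \<union> ran m) \<inter> {a0<..<b0}"
    show "v \<in> (dom (m |` {a0..b0}) \<union> ran (m |` {a0..b0})) - {a0, b0}"
    proof (cases "v \<in> dom m")
      case True then show ?thesis using v by auto
    next
      case False
      then obtain x where x: "m x = Some v" using v by (auto simp: ran_def)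
      then have "x \<in> {a0<..<b0}" using fx_in[OF assms x] v by auto
      then have "(m |` {a0..b0}) x = Some v" using x by (simp add: restrict_map_def less_imp_le)
      then show ?thesis using v by (auto simp: ran_def)
    qed
  qed
  then show ?thesis unfolding Ess_def ptsI_def using restr_MinMax[OF assms] by simp
qed

lemma restr_Fix: "Fix (m |` {a0..b0}) = Fix m \<inter> {a0..b0}"
  unfolding Fix_def by (auto simp: restrict_map_def split: if_splits)

lemma restr_inc:
  assumes "\<alpha> \<in> {a0..b0}" "\<beta> \<in> {a0..b0}"
  shows "p_increasing (m |` {a0..b0}) \<alpha> \<beta> \<longleftrightarrow> p_increasing m \<alpha> \<beta>"
    "p_decreasing (m |` {a0..b0}) \<alpha> \<beta> \<longleftrightarrow> p_decreasing m \<alpha> \<beta>"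
    "p_monotone (m |` {a0..b0}) \<alpha> \<beta> \<longleftrightarrow> p_monotone m \<alpha> \<beta>"
proof -
  have e: "dom (m |` {a0..b0}) \<inter> {\<alpha><..<\<beta>} = dom m \<inter> {\<alpha><..<\<beta>}" using assms by auto
  have v: "(m |` {a0..b0}) c = m c" if "c \<in> {\<alpha><..<\<beta>}" for c
  proof -
    have "a0 \<le> c" "c \<le> b0" using assms that
      by (meson atLeastAtMost_iff greaterThanLessThan_iff less_imp_le order_trans)+
    then show ?thesis by (simp add: restrict_map_def)
  qed
  show 1: "p_increasing (m |` {a0..b0}) \<alpha> \<beta> \<longleftrightarrow> p_increasing m \<alpha> \<beta>"
    unfolding p_increasing_def e using assms v by auto
  show 2: "p_decreasing (m |` {a0..b0}) \<alpha> \<beta> \<longleftrightarrow> p_decreasing m \<alpha> \<beta>"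
    unfolding p_decreasing_def e using assms v by auto
  show "p_monotone (m |` {a0..b0}) \<alpha> \<beta> \<longleftrightarrow> p_monotone m \<alpha> \<beta>"
    unfolding p_monotone_def 1 2 ..
qed

lemma act_restr:
  assumes "fx P" "fx Q" "x \<in> {a0..b0}"
  shows "act (P |` {a0..b0}) (Q |` {a0..b0}) g x = act P Q g x \<and>
         (\<forall>y. act P Q g x = Some y \<longrightarrow> y \<in> {a0..b0})"
proof -
  have gen: "pinv (m |` {a0..b0}) x = pinv m x \<and> (\<forall>y. pinv m x = Some y \<longrightarrow> y \<in> {a0..b0})"
    if fm: "fx m" for m
  proof -
    have pm: "partial_iso d m" and pr: "partial_iso d (m |` {a0..b0})"
      using fm piso_restrict unfolding fx_def by auto
    have 1: "y \<in> {a0..b0}" if py: "pinv m x = Some y" for y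
    proof -
      have "m y = Some x" using pinv_iff[OF pm] py by simp
      then show ?thesis using fx_in[OF fm] assms(3) by auto
    qed
    have "pinv (m |` {a0..b0}) x = pinv m x"
    proof (cases "pinv m x")
      case None
      show ?thesis
      proof (rule ccontr)
        assume "pinv (m |` {a0..b0}) x \<noteq> pinv m x"
        then obtain y where "pinv (m |` {a0..b0}) x = Some y" using None by auto
        then have "(m |` {a0..b0}) y = Some x" using pinv_iff[OF pr] by simp
        then have "m y = Some x" by (auto simp: restrict_map_def split: if_splits)
        then have "pinv m x = Some y" using pinv_iff[OF pm] by simp
        then show False using None by simp
      qed
    next
      case (Some y)
      then have "m y = Some x" "y \<in> {a0..b0}" using pinv_iff[OF pm] 1 by auto
      then have "(m |` {a0..b0}) y = Some x" by auto
      then show ?thesis using Some pinv_iff[OF pr] by simp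
    qed
    then show ?thesis using 1 by auto
  qed
  have gen2: "(m |` {a0..b0}) x = m x \<and> (\<forall>y. m x = Some y \<longrightarrow> y \<in> {a0..b0})"
    if fm: "fx m" for m
    using assms(3) fx_in[OF fm] by auto
  show ?thesis using gen[OF assms(1)] gen[OF assms(2)] gen2[OF assms(1)] gen2[OF assms(2)]
    by (cases g) auto
qed

lemma eval_restr:
  assumes "fx P" "fx Q" "c \<in> {a0..b0}"
  shows "eval_word W (P |` {a0..b0}) (Q |` {a0..b0}) c = eval_word W P Q c \<and>
         (\<forall>y. eval_word W P Q c = Some y \<longrightarrow> y \<in> {a0..b0})"
proof (induction W)
  case Nil then show ?case using assms by simp
next
  case (Cons g W)
  show ?case
  proof (cases "eval_word W P Q c")
    case None then show ?thesis using Cons by simp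
  next
    case (Some x)
    then have "x \<in> {a0..b0}" using Cons by simp
    then show ?thesis using Some Cons act_restr[OF assms(1,2), of x g] by simp
  qed
qed

end




lemma inc_sub:
  assumes "p_increasing m \<alpha> \<beta>" "\<alpha> \<le> \<alpha>'" "\<beta>' \<le> \<beta>" "\<alpha>' < \<beta>'"
    "m' \<alpha>' = Some \<alpha>'" "m' \<beta>' = Some \<beta>'" "m \<subseteq>\<^sub>m m'" "dom m' \<inter> {\<alpha>'<..<\<beta>'} \<subseteq> dom m"
  shows "p_increasing m' \<alpha>' \<beta>'"
  unfolding p_increasing_def
proof (intro conjI ballI)
  fix c assume c: "c \<in> dom m' \<inter> {\<alpha>'<..<\<beta>'}"
  then have cm: "c \<in> dom m" using assms(8) by auto
  then obtain v where v: "m c = Some v" by auto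
  have "m' c = Some v" using map_le_apply[OF assms(7) v] .
  have "\<alpha> < c" "c < \<beta>" using c assms(2,3) by auto
  then have "c < the (m c)" using assms(1) cm unfolding p_increasing_def by auto
  then show "c < the (m' c)" using v \<open>m' c = Some v\<close> by simp
qed (use assms in auto)

lemma dec_sub:
  assumes "p_decreasing m \<alpha> \<beta>" "\<alpha> \<le> \<alpha>'" "\<beta>' \<le> \<beta>" "\<alpha>' < \<beta>'"
    "m' \<alpha>' = Some \<alpha>'" "m' \<beta>' = Some \<beta>'" "m \<subseteq>\<^sub>m m'" "dom m' \<inter> {\<alpha>'<..<\<beta>'} \<subseteq> dom m"
  shows "p_decreasing m' \<alpha>' \<beta>'"
  unfolding p_decreasing_def
proof (intro conjI ballI)
  fix c assume c: "c \<in> dom m' \<inter> {\<alpha>'<..<\<beta>'}"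
  then have cm: "c \<in> dom m" using assms(8) by auto
  then obtain v where v: "m c = Some v" by auto
  have "m' c = Some v" using map_le_apply[OF assms(7) v] .
  have "\<alpha> < c" "c < \<beta>" using c assms(2,3) by auto
  then have "the (m c) < c" using assms(1) cm unfolding p_decreasing_def by auto
  then show "the (m' c) < c" using v \<open>m' c = Some v\<close> by simp
qed (use assms in auto)

lemma mono_sub:
  assumes "p_monotone m \<alpha> \<beta>" "\<alpha> \<le> \<alpha>'" "\<beta>' \<le> \<beta>" "\<alpha>' < \<beta>'"
    "m' \<alpha>' = Some \<alpha>'" "m' \<beta>' = Some \<beta>'" "m \<subseteq>\<^sub>m m'" "dom m' \<inter> {\<alpha>'<..<\<beta>'} \<subseteq> dom m"
  shows "p_monotone m' \<alpha>' \<beta>'"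
  using assms inc_sub[of m \<alpha> \<beta> \<alpha>' \<beta>' m'] dec_sub[of m \<alpha> \<beta> \<alpha>' \<beta>' m']
  unfolding p_monotone_def by blast

lemma Fix_mono: "m \<subseteq>\<^sub>m m' \<Longrightarrow> Fix m \<subseteq> Fix m'"
proof
  fix x assume "m \<subseteq>\<^sub>m m'" "x \<in> Fix m"
  then have "m x = Some x" unfolding Fix_def by simp
  then have "m' x = Some x" using map_le_apply \<open>m \<subseteq>\<^sub>m m'\<close> by metis
  then show "x \<in> Fix m'" unfolding Fix_def by auto
qed

lemma FixD: "x \<in> Fix m \<Longrightarrow> m x = Some x"
  unfolding Fix_def by auto

lemma FixI: "m x = Some x \<Longrightarrow> x \<in> Fix m"
  unfolding Fix_def by auto

lemma infU_ext:
  assumes "infU a0 m a" "m \<subseteq>\<^sub>m m'" "dom m' \<inter> {..a} \<subseteq> dom m"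
  shows "infU a0 m' a"
proof -
  obtain F where F: "F \<subseteq> Fix m" "\<forall>x\<in>F. a0 \<le> x \<and> x \<le> a" "a0 \<in> F" "a \<in> F"
    "\<forall>\<alpha>\<in>F. \<forall>\<beta>\<in>F. \<alpha> < \<beta> \<and> (\<forall>c\<in>F. \<not> (\<alpha> < c \<and> c < \<beta>)) \<longrightarrow> p_monotone m \<alpha> \<beta>"
    using assms(1) unfolding infU_def by blast
  have "F \<subseteq> Fix m'" using F(1) Fix_mono[OF assms(2)] by auto
  moreover have "\<forall>\<alpha>\<in>F. \<forall>\<beta>\<in>F. \<alpha> < \<beta> \<and> (\<forall>c\<in>F. \<not> (\<alpha> < c \<and> c < \<beta>)) \<longrightarrow> p_monotone m' \<alpha> \<beta>"
  proof (intro ballI impI)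
    fix \<alpha> \<beta> assume ab: "\<alpha> \<in> F" "\<beta> \<in> F" "\<alpha> < \<beta> \<and> (\<forall>c\<in>F. \<not> (\<alpha> < c \<and> c < \<beta>))"
    have "p_monotone m \<alpha> \<beta>" using F(5) ab by blast
    moreover have "\<alpha> \<in> Fix m'" "\<beta> \<in> Fix m'" using ab(1,2) \<open>F \<subseteq> Fix m'\<close> by auto
    then have "m' \<alpha> = Some \<alpha>" "m' \<beta> = Some \<beta>" by (simp_all add: FixD)
    moreover have "dom m' \<inter> {\<alpha><..<\<beta>} \<subseteq> dom m"
    proof
      fix c assume c: "c \<in> dom m' \<inter> {\<alpha><..<\<beta>}"
      have "\<beta> \<le> a" using F(2) ab(2) by blast
      then have "c \<le> a" using c by auto
      then show "c \<in> dom m" using assms(3) c by blast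
    qed
    ultimately show "p_monotone m' \<alpha> \<beta>" using mono_sub[of m \<alpha> \<beta> \<alpha> \<beta> m'] ab(3) assms(2) by simp
  qed
  ultimately show ?thesis using F(2,3,4) unfolding infU_def by (intro exI[of _ F]) simp
qed

lemma infU_extend:
  fixes a :: "'a::linorder"
  assumes "infU a0 m a" "a < b" "m b = Some b" "p_monotone m a b"
  shows "infU a0 m b"
proof -
  obtain F where F: "F \<subseteq> Fix m" "\<forall>x\<in>F. a0 \<le> x \<and> x \<le> a" "a0 \<in> F" "a \<in> F"
    "\<forall>\<alpha>\<in>F. \<forall>\<beta>\<in>F. \<alpha> < \<beta> \<and> (\<forall>c\<in>F. \<not> (\<alpha> < c \<and> c < \<beta>)) \<longrightarrow> p_monotone m \<alpha> \<beta>"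
    using assms(1) unfolding infU_def by blast
  define F' where "F' = insert b F"
  have "F' \<subseteq> Fix m" using F(1) assms(3) FixI unfolding F'_def by auto
  moreover have "\<forall>x\<in>F'. a0 \<le> x \<and> x \<le> b" using F(2,3) assms(2) unfolding F'_def by force
  moreover have "\<forall>\<alpha>\<in>F'. \<forall>\<beta>\<in>F'. \<alpha> < \<beta> \<and> (\<forall>c\<in>F'. \<not> (\<alpha> < c \<and> c < \<beta>)) \<longrightarrow> p_monotone m \<alpha> \<beta>"
  proof (intro ballI impI)
    fix \<alpha> \<beta> assume ab: "\<alpha> \<in> F'" "\<beta> \<in> F'" "\<alpha> < \<beta> \<and> (\<forall>c\<in>F'. \<not> (\<alpha> < c \<and> c < \<beta>))"
    show "p_monotone m \<alpha> \<beta>"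
    proof (cases "\<beta> = b")
      case True
      have "\<alpha> \<in> F" using ab True unfolding F'_def by auto
      have "\<alpha> = a"
      proof (rule ccontr)
        assume "\<alpha> \<noteq> a"
        then have "\<alpha> < a" using F(2) \<open>\<alpha> \<in> F\<close> by force
        then show False using ab F(4) True assms(2) unfolding F'_def by auto
      qed
      then show ?thesis using True assms(4) by simp
    next
      case False
      then have "\<beta> \<in> F" using ab unfolding F'_def by auto
      then have "\<beta> < b" using F(2) assms(2) by force
      then have "\<alpha> \<in> F" using ab unfolding F'_def by auto
      then show ?thesis using F(5) ab \<open>\<beta> \<in> F\<close> unfolding F'_def by auto
    qed
  qed
  ultimately show ?thesis unfolding infU_def using F(3) unfolding F'_def by (intro exI[of _ "insert b F"]) simp
qed

lemma infU_restrict: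
  fixes a :: "'a::linorder"
  assumes "infU a0 m b" "m a = Some a" "a0 \<le> a" "a \<le> b" "finite (dom m)"
  shows "infU a0 m a"
proof -
  obtain F where F: "F \<subseteq> Fix m" "\<forall>x\<in>F. a0 \<le> x \<and> x \<le> b" "a0 \<in> F" "b \<in> F"
    "\<forall>\<alpha>\<in>F. \<forall>\<beta>\<in>F. \<alpha> < \<beta> \<and> (\<forall>c\<in>F. \<not> (\<alpha> < c \<and> c < \<beta>)) \<longrightarrow> p_monotone m \<alpha> \<beta>"
    using assms(1) unfolding infU_def by blast
  have finF: "finite F"
  proof -
    have "F \<subseteq> dom m" using F(1) unfolding Fix_def by auto
    moreover have "finite (dom m)" using assms(5) .
    ultimately show ?thesis by (rule finite_subset)
  qed
  define F' where "F' = insert a {x\<in>F. x \<le> a}"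
  have "F' \<subseteq> Fix m" using F(1) assms(2) FixI unfolding F'_def by auto
  moreover have "\<forall>x\<in>F'. a0 \<le> x \<and> x \<le> a" using F(2) assms(3) unfolding F'_def by auto
  moreover have "a0 \<in> F'" using F(3) assms(3) unfolding F'_def by auto
  moreover have "\<forall>\<alpha>\<in>F'. \<forall>\<beta>\<in>F'. \<alpha> < \<beta> \<and> (\<forall>c\<in>F'. \<not> (\<alpha> < c \<and> c < \<beta>)) \<longrightarrow> p_monotone m \<alpha> \<beta>"
  proof (intro ballI impI)
    fix \<alpha> \<beta> assume ab: "\<alpha> \<in> F'" "\<beta> \<in> F'" "\<alpha> < \<beta> \<and> (\<forall>c\<in>F'. \<not> (\<alpha> < c \<and> c < \<beta>))"
    have aF: "\<alpha> \<in> F" using ab unfolding F'_def by auto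
    show "p_monotone m \<alpha> \<beta>"
    proof (cases "\<beta> \<in> F")
      case True
      have "\<forall>c\<in>F. \<not> (\<alpha> < c \<and> c < \<beta>)"
      proof (intro ballI notI)
        fix c assume "c \<in> F" "\<alpha> < c \<and> c < \<beta>"
        moreover have "\<beta> \<le> a" using ab unfolding F'_def by auto
        ultimately show False using ab unfolding F'_def by auto
      qed
      then show ?thesis using F(5) aF True ab by blast
    next
      case False
      then have ba: "\<beta> = a" using ab unfolding F'_def by auto
      define G where "G = {x\<in>F. a < x}"
      have "b \<in> G" using F(4) assms(4) False ba unfolding G_def by (auto simp: le_less)
      have fG: "finite G" using finF unfolding G_def by auto
      define \<gamma> where "\<gamma> = Min G"
      have gG: "\<gamma> \<in> G" unfolding \<gamma>_def using fG \<open>b \<in> G\<close> by (intro Min_in) auto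
      have gmin: "\<forall>x\<in>G. \<gamma> \<le> x" unfolding \<gamma>_def using fG by auto
      have "\<forall>c\<in>F. \<not> (\<alpha> < c \<and> c < \<gamma>)"
      proof (intro ballI notI)
        fix c assume c: "c \<in> F" "\<alpha> < c \<and> c < \<gamma>"
        show False
        proof (cases "a < c")
          case True then have "c \<in> G" using c unfolding G_def by auto
          then show False using gmin c by force
        next
          case False
          then have "c < a" using c(1) \<open>\<beta> \<notin> F\<close> ba by (auto simp: not_less le_less)
          then have "c \<in> F'" using c unfolding F'_def by auto
          then show False using ab c \<open>c < a\<close> ba by auto
        qed
      qed
      moreover have "\<alpha> < \<gamma>" using gG ab ba unfolding G_def by auto
      moreover have "\<gamma> \<in> F" using gG unfolding G_def by auto
      ultimately have "p_monotone m \<alpha> \<gamma>" using F(5) aF by blast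
      moreover have "a < \<gamma>" using gG unfolding G_def by auto
      moreover have "\<alpha> \<in> Fix m" using F(1) aF by auto
      ultimately show ?thesis
        using mono_sub[of m \<alpha> \<gamma> \<alpha> a m] FixD[of \<alpha> m] ab ba assms(2)
        by (simp add: order.strict_implies_order)
    qed
  qed
  moreover have "a \<in> F'" unfolding F'_def by simp
  ultimately show ?thesis unfolding infU_def by blast
qed




context ival begin

lemma inf_to_infU:
  assumes fm: "fx m" and inf: "informative (m |` {a0..b0})"
  shows "infU a0 m b0"
proof -
  obtain F where F: "F \<subseteq> Fix (m |` {a0..b0})" "Min (dom (m |` {a0..b0})) \<in> F" "Max (dom (m |` {a0..b0})) \<in> F"
    "\<forall>a\<in>F. \<forall>b\<in>F. a < b \<and> (\<forall>c\<in>F. \<not> (a < c \<and> c < b)) \<longrightarrow> p_monotone (m |` {a0..b0}) a b"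
    using inf unfolding informative_def by blast
  have F1: "F \<subseteq> Fix m" "F \<subseteq> {a0..b0}" using F(1) restr_Fix by auto
  have "a0 \<in> F" "b0 \<in> F" using F(2,3) restr_MinMax[OF fm] by auto
  moreover have "\<forall>x\<in>F. a0 \<le> x \<and> x \<le> b0" using F1 by auto
  moreover have "\<forall>\<alpha>\<in>F. \<forall>\<beta>\<in>F. \<alpha> < \<beta> \<and> (\<forall>c\<in>F. \<not> (\<alpha> < c \<and> c < \<beta>)) \<longrightarrow> p_monotone m \<alpha> \<beta>"
  proof (intro ballI impI)
    fix \<alpha> \<beta> assume ab: "\<alpha> \<in> F" "\<beta> \<in> F" "\<alpha> < \<beta> \<and> (\<forall>c\<in>F. \<not> (\<alpha> < c \<and> c < \<beta>))"
    then have "p_monotone (m |` {a0..b0}) \<alpha> \<beta>" using F(4) by blast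
    moreover have "\<alpha> \<in> {a0..b0}" "\<beta> \<in> {a0..b0}" using ab F1 by auto
    ultimately show "p_monotone m \<alpha> \<beta>" using restr_inc(3) by blast
  qed
  ultimately show ?thesis unfolding infU_def using F1(1) by blast
qed

lemma infU_to_inf:
  assumes fm: "fx m" and iu: "infU a0 m b0"
  shows "informative (m |` {a0..b0})"
proof -
  obtain F where F: "F \<subseteq> Fix m" "\<forall>x\<in>F. a0 \<le> x \<and> x \<le> b0" "a0 \<in> F" "b0 \<in> F"
    "\<forall>\<alpha>\<in>F. \<forall>\<beta>\<in>F. \<alpha> < \<beta> \<and> (\<forall>c\<in>F. \<not> (\<alpha> < c \<and> c < \<beta>)) \<longrightarrow> p_monotone m \<alpha> \<beta>"
    using iu unfolding infU_def by blast
  have F1: "F \<subseteq> Fix (m |` {a0..b0})" using F(1,2) restr_Fix by auto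
  have mm: "Min (dom (m |` {a0..b0})) = a0" "Max (dom (m |` {a0..b0})) = b0" using restr_MinMax[OF fm] by auto
  have pm: "partial_iso d m" "m a0 = Some a0" "m b0 = Some b0" using fm unfolding fx_def by auto
  have fin: "finite (dom (m |` {a0..b0}))" using piso_fin[OF piso_restrict[OF pm(1)]] .
  have ne: "dom (m |` {a0..b0}) \<noteq> {}" using pm(2) ab by auto
  have v: "(m |` {a0..b0}) a0 = Some a0" "(m |` {a0..b0}) b0 = Some b0" using pm ab by auto
  have "\<forall>\<alpha>\<in>F. \<forall>\<beta>\<in>F. \<alpha> < \<beta> \<and> (\<forall>c\<in>F. \<not> (\<alpha> < c \<and> c < \<beta>)) \<longrightarrow> p_monotone (m |` {a0..b0}) \<alpha> \<beta>"
  proof (intro ballI impI)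
    fix \<alpha> \<beta> assume ab: "\<alpha> \<in> F" "\<beta> \<in> F" "\<alpha> < \<beta> \<and> (\<forall>c\<in>F. \<not> (\<alpha> < c \<and> c < \<beta>))"
    then have "p_monotone m \<alpha> \<beta>" using F(5) by blast
    moreover have "\<alpha> \<in> {a0..b0}" "\<beta> \<in> {a0..b0}" using ab F(2) by auto
    ultimately show "p_monotone (m |` {a0..b0}) \<alpha> \<beta>" using restr_inc(3) by blast
  qed
  then show ?thesis unfolding informative_def mm using fin ne v F1 F(3,4) by blast
qed

end

lemma map_le_upd_new: "x \<notin> dom R \<Longrightarrow> R \<subseteq>\<^sub>m R(x \<mapsto> y)"
  by (auto simp: map_le_def)

lemma process_pos:
  fixes d :: "'a::linorder \<Rightarrow> 'a \<Rightarrow> rat"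
  assumes QU: "QU_prec d" and pi: "partial_iso d R" and ab: "a < b0"
    and inc: "p_increasing R a b0"
    and fT: "finite T" and Tb: "\<forall>t\<in>T. t < b0"
    and Ti: "\<forall>z w. R z = Some w \<and> a < z \<and> z < b0 \<longrightarrow> (\<forall>t\<in>T. t < w)"
    and fX: "finite X" and Xs: "X \<subseteq> {a<..<b0}"
  shows "\<exists>R'. R \<subseteq>\<^sub>m R' \<and> partial_iso d R' \<and> dom R' \<subseteq> dom R \<union> {a<..<b0} \<and> p_increasing R' a b0 \<and>
           X \<subseteq> dom R' \<and> (\<forall>z w. R' z = Some w \<and> a < z \<and> z < b0 \<longrightarrow> (\<forall>t\<in>T. t < w))"
  using fX Xs
proof (induction X rule: finite_induct)
  case empty
  show ?case by (rule exI[of _ R], intro conjI map_le_refl pi inc Ti empty_subsetI Un_upper1)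
next
  case (insert x X)
  have "X \<subseteq> {a<..<b0}" using insert.prems by auto
  then obtain R1 where R1: "R \<subseteq>\<^sub>m R1" "partial_iso d R1" "dom R1 \<subseteq> dom R \<union> {a<..<b0}"
    "p_increasing R1 a b0" "X \<subseteq> dom R1" "\<forall>z w. R1 z = Some w \<and> a < z \<and> z < b0 \<longrightarrow> (\<forall>t\<in>T. t < w)"
    using insert.IH by blast
  have xab: "a < x" "x < b0" using insert.prems by auto
  have R1ab: "R1 a = Some a" "R1 b0 = Some b0" using R1(4) unfolding p_increasing_def by auto
  show ?case
  proof (cases "x \<in> dom R1")
    case True
    then have ins: "insert x X \<subseteq> dom R1" using R1(5) by auto
    show ?thesis apply (rule exI[of _ R1]) using R1(1,2,3,4,6) ins by (intro conjI)
  next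
    case False
    have rne: "ran R1 \<noteq> {}" using R1ab by (auto simp: ran_def)
    have c: "\<forall>z w. R1 z = Some w \<and> x < z \<longrightarrow> (\<forall>t\<in>insert x T. t < w)"
    proof (intro allI impI)
      fix z w assume zw: "R1 z = Some w \<and> x < z"
      show "\<forall>t\<in>insert x T. t < w"
      proof (cases "z < b0")
        case True
        then have "z \<in> dom R1 \<inter> {a<..<b0}" using zw xab by auto
        then have "z < the (R1 z)" using R1(4) unfolding p_increasing_def by blast
        then have "z < w" using zw by simp
        moreover have "R1 z = Some w \<and> a < z \<and> z < b0" using zw xab True by auto
        then have "\<forall>t\<in>T. t < w" using R1(6) by blast
        ultimately show ?thesis using zw by auto
      next
        case False
        then have "b0 \<le> w" using piso_mono_iff(2)[OF R1(2) R1ab(2)] zw by (auto simp: not_less)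
        then show ?thesis using Tb xab by auto
      qed
    qed
    obtain y where y: "partial_iso d (R1(x \<mapsto> y))" "\<forall>t\<in>insert x T. t < y"
      using fwd[OF QU R1(2) False rne _ c] fT by blast
    have le: "R1 \<subseteq>\<^sub>m R1(x \<mapsto> y)" using map_le_upd_new[OF False] .
    have "p_increasing (R1(x \<mapsto> y)) a b0"
      unfolding p_increasing_def
    proof (intro conjI ballI)
      fix c assume c: "c \<in> dom (R1(x \<mapsto> y)) \<inter> {a<..<b0}"
      show "c < the ((R1(x \<mapsto> y)) c)"
      proof (cases "c = x")
        case True then show ?thesis using y(2) by simp
      next
        case False
        then have "c \<in> dom R1 \<inter> {a<..<b0}" using c by auto
        then have "c < the (R1 c)" using R1(4) unfolding p_increasing_def by blast
        then show ?thesis using False by simp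
      qed
    qed (use R1(4) xab in \<open>auto simp: p_increasing_def\<close>)
    moreover have "\<forall>z w. (R1(x \<mapsto> y)) z = Some w \<and> a < z \<and> z < b0 \<longrightarrow> (\<forall>t\<in>T. t < w)"
    proof (intro allI impI)
      fix z w assume zw: "(R1(x \<mapsto> y)) z = Some w \<and> a < z \<and> z < b0"
      show "\<forall>t\<in>T. t < w"
      proof (cases "z = x")
        case True then show ?thesis using zw y(2) by simp
      next
        case False
        then have "R1 z = Some w" using zw by simp
        then show ?thesis using R1(6) zw by blast
      qed
    qed
    moreover have "R \<subseteq>\<^sub>m R1(x \<mapsto> y)" using map_le_trans[OF R1(1) le] .
    moreover have "dom (R1(x \<mapsto> y)) \<subseteq> dom R \<union> {a<..<b0}" using R1(3) xab by auto
    moreover have "insert x X \<subseteq> dom (R1(x \<mapsto> y))" using R1(5) by auto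
    ultimately show ?thesis using y(1)
      by (intro exI[of _ "R1(x \<mapsto> y)"] conjI)
  qed
qed

lemma process_neg:
  fixes d :: "'a::linorder \<Rightarrow> 'a \<Rightarrow> rat"
  assumes QU: "QU_prec d" and pi: "partial_iso d R" and ab: "a < b0"
    and dec: "p_decreasing R a b0"
    and fT: "finite T" and Tb: "\<forall>t\<in>T. t < b0"
    and Ti: "\<forall>z w. R z = Some w \<and> a < z \<and> z < b0 \<longrightarrow> (\<forall>t\<in>T. t < z)"
    and fX: "finite X" and Xs: "X \<subseteq> {a<..<b0}"
  shows "\<exists>R'. R \<subseteq>\<^sub>m R' \<and> partial_iso d R' \<and> dom R' \<subseteq> dom R \<union> {a<..<b0} \<and> p_decreasing R' a b0 \<and>
           X \<subseteq> ran R' \<and> (\<forall>z w. R' z = Some w \<and> a < z \<and> z < b0 \<longrightarrow> (\<forall>t\<in>T. t < z))"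
  using fX Xs
proof (induction X rule: finite_induct)
  case empty
  show ?case by (rule exI[of _ R], intro conjI map_le_refl pi dec Ti empty_subsetI Un_upper1)
next
  case (insert x X)
  have "X \<subseteq> {a<..<b0}" using insert.prems by auto
  then obtain R1 where R1: "R \<subseteq>\<^sub>m R1" "partial_iso d R1" "dom R1 \<subseteq> dom R \<union> {a<..<b0}"
    "p_decreasing R1 a b0" "X \<subseteq> ran R1" "\<forall>z w. R1 z = Some w \<and> a < z \<and> z < b0 \<longrightarrow> (\<forall>t\<in>T. t < z)"
    using insert.IH by blast
  have xab: "a < x" "x < b0" using insert.prems by auto
  have R1ab: "R1 a = Some a" "R1 b0 = Some b0" using R1(4) unfolding p_decreasing_def by auto
  show ?case
  proof (cases "x \<in> ran R1")
    case True
    then have ins: "insert x X \<subseteq> ran R1" using R1(5) by auto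
    show ?thesis apply (rule exI[of _ R1]) using R1(1,2,3,4,6) ins by (intro conjI)
  next
    case False
    have dne: "dom R1 \<noteq> {}" using R1ab by auto
    have c: "\<forall>z w. R1 z = Some w \<and> x < w \<longrightarrow> (\<forall>t\<in>insert x T. t < z)"
    proof (intro allI impI)
      fix z w assume zw: "R1 z = Some w \<and> x < w"
      have az: "a < z"
      proof (rule ccontr)
        assume "\<not> a < z"
        then have "w \<le> a" using piso_mono_iff(2)[OF R1(2) _ R1ab(1)] zw by (auto simp: not_less)
        then show False using zw xab by auto
      qed
      show "\<forall>t\<in>insert x T. t < z"
      proof (cases "z < b0")
        case True
        then have "z \<in> dom R1 \<inter> {a<..<b0}" using zw az by auto
        then have "the (R1 z) < z" using R1(4) unfolding p_decreasing_def by blast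
        then have "w < z" using zw by simp
        moreover have "R1 z = Some w \<and> a < z \<and> z < b0" using zw az True by auto
        then have "\<forall>t\<in>T. t < z" using R1(6) by blast
        ultimately show ?thesis using zw by auto
      next
        case False
        then show ?thesis using Tb xab by (auto simp: not_less)
      qed
    qed
    obtain z0 where z0: "z0 \<notin> dom R1" "partial_iso d (R1(z0 \<mapsto> x))" "\<forall>t\<in>insert x T. t < z0"
      using bwd[OF QU R1(2) False dne _ c] fT by blast
    have le: "R1 \<subseteq>\<^sub>m R1(z0 \<mapsto> x)" using map_le_upd_new[OF z0(1)] .
    have "z0 \<noteq> b0" using z0(1) R1ab by auto
    have zb: "z0 < b0"
    proof (rule ccontr)
      assume "\<not> z0 < b0"
      then have "b0 < z0" using \<open>z0 \<noteq> b0\<close> by auto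
      moreover have "(R1(z0 \<mapsto> x)) b0 = Some b0" using R1ab \<open>z0 \<noteq> b0\<close> by simp
      ultimately have "b0 < x" using piso_D(2)[OF z0(2)] by (metis fun_upd_same)
      then show False using xab by auto
    qed
    have za: "a < z0" using z0(3) xab by auto
    have "p_decreasing (R1(z0 \<mapsto> x)) a b0"
      unfolding p_decreasing_def
    proof (intro conjI ballI)
      fix c assume c: "c \<in> dom (R1(z0 \<mapsto> x)) \<inter> {a<..<b0}"
      show "the ((R1(z0 \<mapsto> x)) c) < c"
      proof (cases "c = z0")
        case True then show ?thesis using z0(3) by simp
      next
        case False
        then have "c \<in> dom R1 \<inter> {a<..<b0}" using c by auto
        then have "the (R1 c) < c" using R1(4) unfolding p_decreasing_def by blast
        then show ?thesis using False by simp
      qed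
    qed (use R1(4) za zb \<open>z0 \<noteq> b0\<close> in \<open>auto simp: p_decreasing_def\<close>)
    moreover have "\<forall>z w. (R1(z0 \<mapsto> x)) z = Some w \<and> a < z \<and> z < b0 \<longrightarrow> (\<forall>t\<in>T. t < z)"
    proof (intro allI impI)
      fix z w assume zw: "(R1(z0 \<mapsto> x)) z = Some w \<and> a < z \<and> z < b0"
      show "\<forall>t\<in>T. t < z"
      proof (cases "z = z0")
        case True then show ?thesis using z0(3) by simp
      next
        case False
        then have "R1 z = Some w" using zw by simp
        then show ?thesis using R1(6) zw by blast
      qed
    qed
    moreover have "R \<subseteq>\<^sub>m R1(z0 \<mapsto> x)" using map_le_trans[OF R1(1) le] .
    moreover have "insert x X \<subseteq> ran (R1(z0 \<mapsto> x))"
    proof -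
      have "ran R1 \<subseteq> ran (R1(z0 \<mapsto> x))" using z0(1) by (auto simp: ran_def)
      moreover have "x \<in> ran (R1(z0 \<mapsto> x))" by (auto simp: ran_def)
      ultimately show ?thesis using R1(5) by blast
    qed
    moreover have "dom (R1(z0 \<mapsto> x)) \<subseteq> dom R \<union> {a<..<b0}" using R1(3) za zb by auto
    ultimately show ?thesis using z0(2)
      by (intro exI[of _ "R1(z0 \<mapsto> x)"] conjI)
  qed
qed




definition sletter :: "gen \<Rightarrow> bool" where "sletter g \<longleftrightarrow> g = Gs \<or> g = Gs_inv"
definition base :: "gen \<Rightarrow> ('a \<rightharpoonup> 'a) \<Rightarrow> ('a \<rightharpoonup> 'a) \<Rightarrow> ('a \<rightharpoonup> 'a)" where
  "base g P Q = (if sletter g then P else Q)"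
definition oth :: "gen \<Rightarrow> ('a \<rightharpoonup> 'a) \<Rightarrow> ('a \<rightharpoonup> 'a) \<Rightarrow> ('a \<rightharpoonup> 'a)" where
  "oth g P Q = (if sletter g then Q else P)"
definition posg :: "gen \<Rightarrow> bool" where "posg g \<longleftrightarrow> g = Gs \<or> g = Gt"
definition mdir :: "gen \<Rightarrow> ('a::linorder \<rightharpoonup> 'a) \<Rightarrow> 'a \<Rightarrow> 'a \<Rightarrow> bool" where
  "mdir g m a b = (if posg g then p_increasing m a b else p_decreasing m a b)"

definition INV :: "('a::linorder \<Rightarrow> 'a \<Rightarrow> rat) \<Rightarrow> 'a \<Rightarrow> 'a \<Rightarrow> 'a set \<Rightarrow> gen list \<Rightarrow>
    ('a \<rightharpoonup> 'a) \<Rightarrow> ('a \<rightharpoonup> 'a) \<Rightarrow> bool" where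
  "INV d a0 b0 E W P Q \<longleftrightarrow>
     partial_iso d P \<and> partial_iso d Q \<and> P a0 = Some a0 \<and> P b0 = Some b0 \<and>
     Q a0 = Some a0 \<and> Q b0 = Some b0 \<and> a0 < b0 \<and> W \<noteq> [] \<and> finite E \<and> E \<subseteq> {a0<..<b0} \<and>
     (\<forall>c\<in>E. eval_word W P Q c \<noteq> None) \<and>
     (\<forall>c y. c \<in> E \<and> eval_word W P Q c = Some y \<longrightarrow> (\<forall>v\<in>ptsI a0 b0 (oth (hd W) P Q). v < y)) \<and>
     (\<exists>a. a0 \<le> a \<and> a < b0 \<and> (\<forall>c y. c \<in> E \<and> eval_word W P Q c = Some y \<longrightarrow> a < y \<and> y < b0) \<and>
          mdir (hd W) (base (hd W) P Q) a b0 \<and> infU a0 (base (hd W) P Q) a) \<and>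
     infU a0 (oth (hd W) P Q) b0"

lemma swap_swap[simp]: "swap_gen (swap_gen g) = g"
  by (cases g) auto

lemma map_swap_swap[simp]: "map swap_gen (map swap_gen W) = W"
  by (induction W) auto

lemma inv_swap: "inv_gen (swap_gen g) = swap_gen (inv_gen g)"
  by (cases g) auto

lemma inv_inv[simp]: "inv_gen (inv_gen g) = g"
  by (cases g) auto

lemma act_swap: "act Q P (swap_gen g) = act P Q g"
  by (cases g) auto

lemma eval_swap: "eval_word (map swap_gen W) Q P c = eval_word W P Q c"
  by (induction W) (auto simp: act_swap split: option.splits)

lemma swap_props:
  "base (swap_gen g) Q P = base g P Q" "oth (swap_gen g) Q P = oth g P Q"
  "posg (swap_gen g) = posg g" "mdir (swap_gen g) = mdir g"
  unfolding base_def oth_def posg_def mdir_def sletter_def by (cases g; auto)+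

lemma INV_swap:
  assumes "INV d a0 b0 E W P Q"
  shows "INV d a0 b0 E (map swap_gen W) Q P"
proof -
  have W: "W \<noteq> []" using assms unfolding INV_def by auto
  then have h: "hd (map swap_gen W) = swap_gen (hd W)" by (cases W) auto
  show ?thesis using assms W unfolding INV_def h eval_swap swap_props by simp
qed

lemma INV_swap_iff: "INV d a0 b0 E (map swap_gen W) Q P \<longleftrightarrow> INV d a0 b0 E W P Q"
proof
  assume h: "INV d a0 b0 E (map swap_gen W) Q P"
  have "INV d a0 b0 E (map swap_gen (map swap_gen W)) P Q" by (rule INV_swap[OF h])
  then show "INV d a0 b0 E W P Q" by (simp only: map_swap_swap)
qed (rule INV_swap)

lemma last_interval:
  fixes m :: "'a::linorder \<rightharpoonup> 'a"
  assumes "infU a0 m b0" "a0 < b0" "finite (dom m)"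
  shows "\<exists>\<alpha>. a0 \<le> \<alpha> \<and> \<alpha> < b0 \<and> m \<alpha> = Some \<alpha> \<and> infU a0 m \<alpha> \<and> p_monotone m \<alpha> b0"
proof -
  obtain F where F: "F \<subseteq> Fix m" "\<forall>x\<in>F. a0 \<le> x \<and> x \<le> b0" "a0 \<in> F" "b0 \<in> F"
    "\<forall>\<alpha>\<in>F. \<forall>\<beta>\<in>F. \<alpha> < \<beta> \<and> (\<forall>c\<in>F. \<not> (\<alpha> < c \<and> c < \<beta>)) \<longrightarrow> p_monotone m \<alpha> \<beta>"
    using assms(1) unfolding infU_def by blast
  have finF: "finite F"
  proof -
    have "F \<subseteq> dom m" using F(1) unfolding Fix_def by auto
    then show ?thesis using assms(3) by (rule finite_subset)
  qed
  define G where "G = {x\<in>F. x < b0}"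
  have fG: "finite G" using finF unfolding G_def by auto
  have a0G: "a0 \<in> G" using F(3) assms(2) unfolding G_def by auto
  define \<alpha> where "\<alpha> = Max G"
  have aG: "\<alpha> \<in> G" unfolding \<alpha>_def using fG a0G by (intro Max_in) auto
  have amax: "\<forall>x\<in>G. x \<le> \<alpha>" unfolding \<alpha>_def using fG by auto
  have aF: "\<alpha> \<in> F" "\<alpha> < b0" using aG unfolding G_def by auto
  have "\<alpha> \<in> Fix m" using F(1) aF by auto
  then have fa: "m \<alpha> = Some \<alpha>" by (rule FixD)
  have a0a: "a0 \<le> \<alpha>" using amax a0G by auto
  have "\<forall>c\<in>F. \<not> (\<alpha> < c \<and> c < b0)"
  proof (intro ballI notI)
    fix c assume "c \<in> F" "\<alpha> < c \<and> c < b0"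
    then have "c \<in> G" unfolding G_def by auto
    then show False using amax \<open>\<alpha> < c \<and> c < b0\<close> by force
  qed
  then have "p_monotone m \<alpha> b0" using F(5) aF F(4) by blast
  moreover have "infU a0 m \<alpha>" using infU_restrict[OF assms(1) fa a0a _ assms(3)] aF by simp
  ultimately show ?thesis using a0a aF fa by blast
qed

lemma reduced_ConsD:
  assumes "reduced (g # L)"
  shows "reduced L" "L \<noteq> [] \<Longrightarrow> g \<noteq> inv_gen (hd L)"
proof -
  show "reduced L" using assms unfolding reduced_def
  proof (intro allI impI)
    fix i assume "\<forall>i. Suc i < length (g # L) \<longrightarrow> (g # L) ! Suc i \<noteq> inv_gen ((g # L) ! i)" "Suc i < length L"
    then show "L ! Suc i \<noteq> inv_gen (L ! i)" by (metis Suc_less_eq length_Cons nth_Cons_Suc)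
  qed
  assume "L \<noteq> []"
  then have "(g # L) ! Suc 0 \<noteq> inv_gen ((g # L) ! 0)" using assms unfolding reduced_def by auto
  then have "hd L \<noteq> inv_gen g" using \<open>L \<noteq> []\<close> by (cases L) auto
  then show "g \<noteq> inv_gen (hd L)" by auto
qed




lemma INV_elim:
  assumes "INV d a0 b0 E W P Q"
  shows "partial_iso d P" "partial_iso d Q" "P a0 = Some a0" "P b0 = Some b0"
    "Q a0 = Some a0" "Q b0 = Some b0" "a0 < b0" "W \<noteq> []" "finite E" "E \<subseteq> {a0<..<b0}"
    "infU a0 (oth (hd W) P Q) b0"
    "\<exists>a. a0 \<le> a \<and> a < b0 \<and> mdir (hd W) (base (hd W) P Q) a b0 \<and> infU a0 (base (hd W) P Q) a \<and>
        (\<forall>c\<in>E. \<exists>y. eval_word W P Q c = Some y \<and> a < y \<and> y < b0 \<and>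
                    (\<forall>v\<in>ptsI a0 b0 (oth (hd W) P Q). v < y))"
proof -
  show "partial_iso d P" "partial_iso d Q" "P a0 = Some a0" "P b0 = Some b0"
    "Q a0 = Some a0" "Q b0 = Some b0" "a0 < b0" "W \<noteq> []" "finite E" "E \<subseteq> {a0<..<b0}"
    "infU a0 (oth (hd W) P Q) b0" using assms unfolding INV_def by blast+
  obtain a where a: "a0 \<le> a" "a < b0" "\<forall>c y. c \<in> E \<and> eval_word W P Q c = Some y \<longrightarrow> a < y \<and> y < b0"
    "mdir (hd W) (base (hd W) P Q) a b0" "infU a0 (base (hd W) P Q) a"
    using assms unfolding INV_def by blast
  have d: "\<forall>c\<in>E. eval_word W P Q c \<noteq> None" 
    and p: "\<forall>c y. c \<in> E \<and> eval_word W P Q c = Some y \<longrightarrow> (\<forall>v\<in>ptsI a0 b0 (oth (hd W) P Q). v < y)"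
    using assms unfolding INV_def by blast+
  have "\<forall>c\<in>E. \<exists>y. eval_word W P Q c = Some y \<and> a < y \<and> y < b0 \<and>
                    (\<forall>v\<in>ptsI a0 b0 (oth (hd W) P Q). v < y)"
  proof
    fix c assume c: "c \<in> E"
    then obtain y where y: "eval_word W P Q c = Some y" using d by auto
    show "\<exists>y. eval_word W P Q c = Some y \<and> a < y \<and> y < b0 \<and> (\<forall>v\<in>ptsI a0 b0 (oth (hd W) P Q). v < y)"
      apply (rule exI[of _ y])
      using y c a(3) p by blast
  qed
  then show "\<exists>a. a0 \<le> a \<and> a < b0 \<and> mdir (hd W) (base (hd W) P Q) a b0 \<and> infU a0 (base (hd W) P Q) a \<and>
        (\<forall>c\<in>E. \<exists>y. eval_word W P Q c = Some y \<and> a < y \<and> y < b0 \<and>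
                    (\<forall>v\<in>ptsI a0 b0 (oth (hd W) P Q). v < y))" using a by blast
qed

lemma INV_intro:
  assumes "partial_iso d P" "partial_iso d Q" "P a0 = Some a0" "P b0 = Some b0"
    "Q a0 = Some a0" "Q b0 = Some b0" "a0 < b0" "W \<noteq> []" "finite E" "E \<subseteq> {a0<..<b0}"
    "infU a0 (oth (hd W) P Q) b0"
    "a0 \<le> a" "a < b0" "mdir (hd W) (base (hd W) P Q) a b0" "infU a0 (base (hd W) P Q) a"
    "\<forall>c\<in>E. \<exists>y. eval_word W P Q c = Some y \<and> a < y \<and> y < b0 \<and>
                    (\<forall>v\<in>ptsI a0 b0 (oth (hd W) P Q). v < y)"
  shows "INV d a0 b0 E W P Q"
proof -
  have "\<forall>c\<in>E. eval_word W P Q c \<noteq> None" using assms(16) by fastforce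
  moreover have "\<forall>c y. c \<in> E \<and> eval_word W P Q c = Some y \<longrightarrow> (\<forall>v\<in>ptsI a0 b0 (oth (hd W) P Q). v < y)"
    using assms(16) by fastforce
  moreover have "\<forall>c y. c \<in> E \<and> eval_word W P Q c = Some y \<longrightarrow> a < y \<and> y < b0"
    using assms(16) by fastforce
  ultimately show ?thesis unfolding INV_def using assms(1-15) by blast
qed

lemma step_A:
  fixes d :: "'a::linorder \<Rightarrow> 'a \<Rightarrow> rat"
  assumes QU: "QU_prec d" and I: "INV d a0 b0 E W P Q" and g: "g = Gt \<or> g = Gt_inv" and h: "hd W = g"
  shows "\<exists>P' Q'. P \<subseteq>\<^sub>m P' \<and> Q \<subseteq>\<^sub>m Q' \<and> dom P' \<subseteq> dom P \<union> {a0<..<b0} \<and>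
                 dom Q' \<subseteq> dom Q \<union> {a0<..<b0} \<and> INV d a0 b0 E (g # W) P' Q'"
proof -
  note IE = INV_elim[OF I]
  have ns: "\<not> sletter g" using g unfolding sletter_def by auto
  have bo: "base g P Q = Q" "oth g P Q = P" using ns unfolding base_def oth_def by auto
  obtain a where a: "a0 \<le> a" "a < b0" "mdir g Q a b0" "infU a0 Q a"
     "\<forall>c\<in>E. \<exists>y. eval_word W P Q c = Some y \<and> a < y \<and> y < b0 \<and> (\<forall>v\<in>ptsI a0 b0 P. v < y)"
    using IE(12) h bo by auto
  define X where "X = (\<lambda>c. the (eval_word W P Q c)) ` E"
  have fX: "finite X" unfolding X_def using IE(9) by simp
  have Xs: "X \<subseteq> {a<..<b0}"
  proof
    fix x assume "x \<in> X"
    then obtain c where c: "c \<in> E" "x = the (eval_word W P Q c)" unfolding X_def by auto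
    obtain y where "eval_word W P Q c = Some y" "a < y" "y < b0" using a(5) c(1) by blast
    then show "x \<in> {a<..<b0}" using c(2) by simp
  qed
  have hd': "hd (g # W) = g" by simp
  have Tb0: "\<forall>t\<in>({}::'a set). t < b0" by simp
  have Ti0: "\<forall>z w. Q z = Some w \<and> a < z \<and> z < b0 \<longrightarrow> (\<forall>t\<in>({}::'a set). t < w)" by simp
  have Ti0': "\<forall>z w. Q z = Some w \<and> a < z \<and> z < b0 \<longrightarrow> (\<forall>t\<in>({}::'a set). t < z)" by simp
  have main: "\<exists>Q'. Q \<subseteq>\<^sub>m Q' \<and> partial_iso d Q' \<and> dom Q' \<subseteq> dom Q \<union> {a<..<b0} \<and> mdir g Q' a b0 \<and>
     (\<forall>c\<in>E. \<exists>y. eval_word (g # W) P Q' c = Some y \<and> a < y \<and> y < b0 \<and> (\<forall>v\<in>ptsI a0 b0 P. v < y))"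
  proof (cases "g = Gt")
    case True
    then have inc: "p_increasing Q a b0" using a(3) unfolding mdir_def posg_def by simp
    obtain Q' where Q': "Q \<subseteq>\<^sub>m Q'" "partial_iso d Q'" "dom Q' \<subseteq> dom Q \<union> {a<..<b0}"
      "p_increasing Q' a b0" "X \<subseteq> dom Q'"
      using process_pos[OF QU IE(2) a(2) inc finite.emptyI Tb0 Ti0 fX Xs] by blast
    have Q'b0: "Q' b0 = Some b0" using Q'(4) unfolding p_increasing_def by auto
    have "\<forall>c\<in>E. \<exists>y. eval_word (g # W) P Q' c = Some y \<and> a < y \<and> y < b0 \<and> (\<forall>v\<in>ptsI a0 b0 P. v < y)"
    proof
      fix c assume c: "c \<in> E"
      obtain x where x: "eval_word W P Q c = Some x" "a < x" "x < b0" "\<forall>v\<in>ptsI a0 b0 P. v < x"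
        using a(5) c by blast
      have x': "eval_word W P Q' c = Some x"
        using eval_mono_map[OF IE(1) IE(1) IE(2) Q'(2) map_le_refl Q'(1) x(1)] .
      have "x \<in> X" unfolding X_def using c x(1) by force
      then obtain y where y: "Q' x = Some y" using Q'(5) by auto
      have "x \<in> dom Q' \<inter> {a<..<b0}" using y x by auto
      then have "x < the (Q' x)" using Q'(4) unfolding p_increasing_def by blast
      then have xy: "x < y" using y by simp
      have yb: "y < b0" using piso_D(2)[OF Q'(2) y Q'b0] x(3) .
      have "eval_word (g # W) P Q' c = Some y" using x' y True by simp
      then show "\<exists>y. eval_word (g # W) P Q' c = Some y \<and> a < y \<and> y < b0 \<and> (\<forall>v\<in>ptsI a0 b0 P. v < y)"
        using xy yb x(2,4) by (intro exI[of _ y]) force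
    qed
    moreover have "mdir g Q' a b0" using Q'(4) True unfolding mdir_def posg_def by simp
    ultimately show ?thesis using Q' by blast
  next
    case False
    then have gi: "g = Gt_inv" using g by simp
    then have dec: "p_decreasing Q a b0" using a(3) unfolding mdir_def posg_def by simp
    obtain Q' where Q': "Q \<subseteq>\<^sub>m Q'" "partial_iso d Q'" "dom Q' \<subseteq> dom Q \<union> {a<..<b0}"
      "p_decreasing Q' a b0" "X \<subseteq> ran Q'"
      using process_neg[OF QU IE(2) a(2) dec finite.emptyI Tb0 Ti0' fX Xs] by blast
    have Q'ab: "Q' a = Some a" "Q' b0 = Some b0" using Q'(4) unfolding p_decreasing_def by auto
    have "\<forall>c\<in>E. \<exists>y. eval_word (g # W) P Q' c = Some y \<and> a < y \<and> y < b0 \<and> (\<forall>v\<in>ptsI a0 b0 P. v < y)"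
    proof
      fix c assume c: "c \<in> E"
      obtain x where x: "eval_word W P Q c = Some x" "a < x" "x < b0" "\<forall>v\<in>ptsI a0 b0 P. v < x"
        using a(5) c by blast
      have x': "eval_word W P Q' c = Some x"
        using eval_mono_map[OF IE(1) IE(1) IE(2) Q'(2) map_le_refl Q'(1) x(1)] .
      have "x \<in> X" unfolding X_def using c x(1) by force
      then obtain z where z: "Q' z = Some x" using Q'(5) by (auto simp: ran_def)
      have az: "a < z" using piso_mono_iff(1)[OF Q'(2) Q'ab(1) z] x(2) by simp
      have zb: "z < b0" using piso_mono_iff(1)[OF Q'(2) z Q'ab(2)] x(3) by simp
      have "z \<in> dom Q' \<inter> {a<..<b0}" using z az zb by auto
      then have "the (Q' z) < z" using Q'(4) unfolding p_decreasing_def by blast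
      then have xz: "x < z" using z by simp
      have "pinv Q' x = Some z" using pinv_iff[OF Q'(2)] z by simp
      then have "eval_word (g # W) P Q' c = Some z" using x' gi by simp
      then show "\<exists>y. eval_word (g # W) P Q' c = Some y \<and> a < y \<and> y < b0 \<and> (\<forall>v\<in>ptsI a0 b0 P. v < y)"
        using xz az zb x(4) by (intro exI[of _ z]) force
    qed
    moreover have "mdir g Q' a b0" using Q'(4) gi unfolding mdir_def posg_def by simp
    ultimately show ?thesis using Q' by blast
  qed
  then obtain Q' where Q': "Q \<subseteq>\<^sub>m Q'" "partial_iso d Q'" "dom Q' \<subseteq> dom Q \<union> {a<..<b0}" "mdir g Q' a b0"
     "\<forall>c\<in>E. \<exists>y. eval_word (g # W) P Q' c = Some y \<and> a < y \<and> y < b0 \<and> (\<forall>v\<in>ptsI a0 b0 P. v < y)"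
    by blast
  have iu: "infU a0 Q' a"
  proof (rule infU_ext[OF a(4) Q'(1)])
    show "dom Q' \<inter> {..a} \<subseteq> dom Q"
    proof
      fix x assume x: "x \<in> dom Q' \<inter> {..a}"
      then have "x \<in> dom Q \<union> {a<..<b0}" using Q'(3) by blast
      then show "x \<in> dom Q" using x by auto
    qed
  qed
  have "INV d a0 b0 E (g # W) P Q'"
  proof (rule INV_intro[where a = a])
    show "infU a0 (oth (hd (g # W)) P Q') b0" using IE(11) h ns unfolding oth_def by simp
    show "mdir (hd (g # W)) (base (hd (g # W)) P Q') a b0" using Q'(4) ns unfolding base_def by simp
    show "infU a0 (base (hd (g # W)) P Q') a" using iu ns unfolding base_def by simp
    show "\<forall>c\<in>E. \<exists>y. eval_word (g # W) P Q' c = Some y \<and> a < y \<and> y < b0 \<and>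
                    (\<forall>v\<in>ptsI a0 b0 (oth (hd (g # W)) P Q'). v < y)"
      using Q'(5) ns unfolding oth_def by simp
    show "Q' a0 = Some a0" "Q' b0 = Some b0" using map_le_apply[OF Q'(1)] IE(5,6) by auto
  qed (use IE a Q' in auto)
  moreover have "{a<..<b0} \<subseteq> {a0<..<b0}" using a(1) by auto
  then have "dom Q' \<subseteq> dom Q \<union> {a0<..<b0}" using Q'(3) by blast
  ultimately show ?thesis using Q'(1) map_le_refl[of P] by blast
qed




lemma step_B:
  fixes d :: "'a::linorder \<Rightarrow> 'a \<Rightarrow> rat"
  assumes QU: "QU_prec d" and I: "INV d a0 b0 E W P Q" and g: "g = Gt \<or> g = Gt_inv" and h: "sletter (hd W)"
  shows "\<exists>P' Q'. P \<subseteq>\<^sub>m P' \<and> Q \<subseteq>\<^sub>m Q' \<and> dom P' \<subseteq> dom P \<union> {a0<..<b0} \<and>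
                 dom Q' \<subseteq> dom Q \<union> {a0<..<b0} \<and> INV d a0 b0 E (g # W) P' Q'"
proof -
  note IE = INV_elim[OF I]
  have ns: "\<not> sletter g" using g unfolding sletter_def by auto
  have bh: "base (hd W) P Q = P" "oth (hd W) P Q = Q" using h unfolding base_def oth_def by auto
  obtain a where a: "a0 \<le> a" "a < b0" "mdir (hd W) P a b0" "infU a0 P a"
     "\<forall>c\<in>E. \<exists>y. eval_word W P Q c = Some y \<and> a < y \<and> y < b0 \<and> (\<forall>v\<in>ptsI a0 b0 Q. v < y)"
    using IE(12) bh by auto
  have iQ: "infU a0 Q b0" using IE(11) bh by simp
  have fdQ: "finite (dom Q)" using piso_fin[OF IE(2)] .
  have frQ: "finite (ran Q)" using fdQ finite_ran by blast
  obtain \<alpha> where al: "a0 \<le> \<alpha>" "\<alpha> < b0" "Q \<alpha> = Some \<alpha>" "infU a0 Q \<alpha>" "p_monotone Q \<alpha> b0"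
    using last_interval[OF iQ IE(7) fdQ] by blast
  define X where "X = (\<lambda>c. the (eval_word W P Q c)) ` E"
  have fX: "finite X" unfolding X_def using IE(9) by simp
  have Xp: "a < x \<and> x < b0 \<and> (\<forall>v\<in>ptsI a0 b0 Q. v < x)" if xX: "x \<in> X" for x
  proof -
    obtain c where c: "c \<in> E" "x = the (eval_word W P Q c)" using xX unfolding X_def by auto
    obtain y where "eval_word W P Q c = Some y" "a < y" "y < b0" "\<forall>v\<in>ptsI a0 b0 Q. v < y"
      using a(5) c(1) by blast
    then show ?thesis using c(2) by simp
  qed
  define A where "A = dom Q \<union> ran Q \<union> X"
  define Low where "Low = insert a0 (ptsI a0 b0 Q)"
  have fA: "finite A" unfolding A_def using fdQ frQ fX by simp
  have Ane: "A \<noteq> {}" using IE(5) unfolding A_def by auto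
  have Lowb: "\<forall>t\<in>Low. t < b0" using IE(7) unfolding Low_def ptsI_def by auto
  have cut: "\<forall>z w. Q z = Some w \<longrightarrow> ((\<exists>t\<in>Low. z \<le> t) \<longleftrightarrow> (\<exists>t\<in>Low. w \<le> t))"
  proof (intro allI impI)
    fix z w assume zw: "Q z = Some w"
    have a0L: "a0 \<in> Low" unfolding Low_def by simp
    show "(\<exists>t\<in>Low. z \<le> t) \<longleftrightarrow> (\<exists>t\<in>Low. w \<le> t)"
    proof (cases "z \<le> a0")
      case True
      then have "w \<le> a0" using piso_mono_iff(2)[OF IE(2) zw IE(5)] by simp
      then show ?thesis using True a0L by blast
    next
      case False
      show ?thesis
      proof (cases "z < b0")
        case True
        have "a0 < w" "w < b0" using piso_mono_iff(1)[OF IE(2) IE(5) zw] piso_mono_iff(1)[OF IE(2) zw IE(6)]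
          False True by auto
        then have "w \<in> Low" unfolding Low_def ptsI_def using zw by (auto simp: ran_def)
        moreover have "z \<in> Low" unfolding Low_def ptsI_def using zw False True by auto
        ultimately show ?thesis by blast
      next
        case False
        then have "b0 \<le> w" using piso_mono_iff(2)[OF IE(2) IE(6) zw] by (simp add: not_less)
        then have "\<not> (\<exists>t\<in>Low. w \<le> t)" "\<not> (\<exists>t\<in>Low. z \<le> t)" using Lowb False by force+
        then show ?thesis by blast
      qed
    qed
  qed
  obtain f where f: "f \<notin> A" "partial_iso d (Q(f \<mapsto> f))" "\<forall>v\<in>A. v < f \<longleftrightarrow> (\<exists>t\<in>Low. v \<le> t)"
    using fixpt[OF QU IE(2) fA _ _ Ane cut] unfolding A_def by blast
  have a0A: "a0 \<in> A" "b0 \<in> A" using IE(5,6) unfolding A_def by auto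
  have a0f: "a0 < f" using f(3) a0A(1) unfolding Low_def by auto
  have fb0: "f < b0"
  proof -
    have "\<not> (\<exists>t\<in>Low. b0 \<le> t)" using Lowb by force
    then have "\<not> b0 < f" using f(3) a0A(2) by blast
    moreover have "f \<noteq> b0" using f(1) a0A(2) by auto
    ultimately show ?thesis by auto
  qed
  have ptsf: "\<forall>v\<in>ptsI a0 b0 Q. v < f"
  proof
    fix v assume v: "v \<in> ptsI a0 b0 Q"
    then have "v \<in> A" unfolding A_def ptsI_def by auto
    moreover have "v \<in> Low" using v unfolding Low_def by auto
    ultimately show "v < f" using f(3) by blast
  qed
  have Xf: "f < x" if xX: "x \<in> X" for x
  proof -
    have xA: "x \<in> A" using xX unfolding A_def by auto
    have "\<not> (\<exists>t\<in>Low. x \<le> t)"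
    proof
      assume "\<exists>t\<in>Low. x \<le> t"
      then obtain t where t: "t \<in> Low" "x \<le> t" by blast
      have "a0 < x" using Xp[OF xX] a(1) by auto
      moreover have "\<forall>v\<in>ptsI a0 b0 Q. v < x" using Xp[OF xX] by auto
      ultimately show False using t unfolding Low_def by auto
    qed
    then have "\<not> x < f" using f(3) xA by blast
    moreover have "x \<noteq> f" using f(1) xA by auto
    ultimately show ?thesis by auto
  qed
  have alf: "\<alpha> < f"
  proof (cases "\<alpha> = a0")
    case True then show ?thesis using a0f by simp
  next
    case False
    then have "\<alpha> \<in> ptsI a0 b0 Q" using al unfolding ptsI_def by auto
    then show ?thesis using ptsf by blast
  qed
  have nodom: "\<not> (f < z \<and> z < b0)" if zd: "z \<in> dom Q" for z
  proof
    assume z: "f < z \<and> z < b0"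
    then have "z \<in> ptsI a0 b0 Q" using zd a0f unfolding ptsI_def by auto
    then show False using ptsf z by force
  qed
  define Q1 where "Q1 = Q(f \<mapsto> f)"
  have fQ: "f \<notin> dom Q" using f(1) unfolding A_def by auto
  have QQ1: "Q \<subseteq>\<^sub>m Q1" unfolding Q1_def using map_le_upd_new[OF fQ] .
  have pQ1: "partial_iso d Q1" using f(2) unfolding Q1_def .
  have Q1f: "Q1 f = Some f" "Q1 b0 = Some b0" "Q1 \<alpha> = Some \<alpha>" "Q1 a0 = Some a0"
    unfolding Q1_def using fb0 alf al(3) a0f IE(5,6) by auto
  have nodom1: "\<not> (f < z \<and> z < b0)" if "z \<in> dom Q1" for z
    using that nodom unfolding Q1_def by auto
  have h1: "infU a0 Q1 \<alpha>"
  proof (rule infU_ext[OF al(4) QQ1])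
    show "dom Q1 \<inter> {..\<alpha>} \<subseteq> dom Q" unfolding Q1_def using alf by auto
  qed
  have h2: "p_monotone Q1 \<alpha> f"
  proof (rule mono_sub[OF al(5) order.refl _ alf Q1f(3) Q1f(1) QQ1])
    show "f \<le> b0" using fb0 by simp
    show "dom Q1 \<inter> {\<alpha><..<f} \<subseteq> dom Q" unfolding Q1_def by auto
  qed
  have iQ1: "infU a0 Q1 f" by (rule infU_extend[OF h1 alf Q1f(1) h2])
  have empt: "dom Q1 \<inter> {f<..<b0} = {}" using nodom1 by fastforce
  have inc1: "p_increasing Q1 f b0" "p_decreasing Q1 f b0"
    unfolding p_increasing_def p_decreasing_def empt using fb0 Q1f by auto
  define T where "T = ptsI a0 b0 P"
  have fT: "finite T"
  proof -
    have "finite (dom P)" using piso_fin[OF IE(1)] .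
    moreover then have "finite (ran P)" using finite_ran by blast
    ultimately show ?thesis unfolding T_def ptsI_def by auto
  qed
  have Tb: "\<forall>t\<in>T. t < b0" unfolding T_def ptsI_def by auto
  have Ti: "\<forall>z w. Q1 z = Some w \<and> f < z \<and> z < b0 \<longrightarrow> (\<forall>t\<in>T. t < w)"
    using nodom1 by (meson domI)
  have Ti': "\<forall>z w. Q1 z = Some w \<and> f < z \<and> z < b0 \<longrightarrow> (\<forall>t\<in>T. t < z)"
    using nodom1 by (meson domI)
  have Xs: "X \<subseteq> {f<..<b0}" using Xf Xp by auto
  have main: "\<exists>Q'. Q1 \<subseteq>\<^sub>m Q' \<and> partial_iso d Q' \<and> dom Q' \<subseteq> dom Q1 \<union> {f<..<b0} \<and> mdir g Q' f b0 \<and>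
     (\<forall>c\<in>E. \<exists>y. eval_word (g # W) P Q' c = Some y \<and> f < y \<and> y < b0 \<and> (\<forall>v\<in>T. v < y))"
  proof (cases "g = Gt")
    case True
    obtain Q' where Q': "Q1 \<subseteq>\<^sub>m Q'" "partial_iso d Q'" "dom Q' \<subseteq> dom Q1 \<union> {f<..<b0}"
      "p_increasing Q' f b0" "X \<subseteq> dom Q'" "\<forall>z w. Q' z = Some w \<and> f < z \<and> z < b0 \<longrightarrow> (\<forall>t\<in>T. t < w)"
      using process_pos[OF QU pQ1 fb0 inc1(1) fT Tb Ti fX Xs] by blast
    have Q'b0: "Q' b0 = Some b0" using Q'(4) unfolding p_increasing_def by auto
    have QQ': "Q \<subseteq>\<^sub>m Q'" using map_le_trans[OF QQ1 Q'(1)] .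
    have "\<forall>c\<in>E. \<exists>y. eval_word (g # W) P Q' c = Some y \<and> f < y \<and> y < b0 \<and> (\<forall>v\<in>T. v < y)"
    proof
      fix c assume c: "c \<in> E"
      obtain x where x: "eval_word W P Q c = Some x"
        using a(5) c by blast
      have x': "eval_word W P Q' c = Some x"
        using eval_mono_map[OF IE(1) IE(1) IE(2) Q'(2) map_le_refl QQ' x(1)] .
      have xX: "x \<in> X" unfolding X_def using c x(1) by force
      then have xfb: "f < x" "x < b0" using Xf Xp by auto
      obtain y where y: "Q' x = Some y" using Q'(5) xX by auto
      have "x \<in> dom Q' \<inter> {f<..<b0}" using y xfb by auto
      then have "x < the (Q' x)" using Q'(4) unfolding p_increasing_def by blast
      then have xy: "x < y" using y by simp
      have yb: "y < b0" using piso_D(2)[OF Q'(2) y Q'b0] xfb(2) .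
      have yT: "\<forall>t\<in>T. t < y" using Q'(6) y xfb by blast
      have "eval_word (g # W) P Q' c = Some y" using x' y True by simp
      then show "\<exists>y. eval_word (g # W) P Q' c = Some y \<and> f < y \<and> y < b0 \<and> (\<forall>v\<in>T. v < y)"
        using xy yb xfb yT by (intro exI[of _ y]) force
    qed
    moreover have "mdir g Q' f b0" using Q'(4) True unfolding mdir_def posg_def by simp
    ultimately show ?thesis using Q'(1,2,3) by blast
  next
    case False
    then have gi: "g = Gt_inv" using g by simp
    obtain Q' where Q': "Q1 \<subseteq>\<^sub>m Q'" "partial_iso d Q'" "dom Q' \<subseteq> dom Q1 \<union> {f<..<b0}"
      "p_decreasing Q' f b0" "X \<subseteq> ran Q'" "\<forall>z w. Q' z = Some w \<and> f < z \<and> z < b0 \<longrightarrow> (\<forall>t\<in>T. t < z)"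
      using process_neg[OF QU pQ1 fb0 inc1(2) fT Tb Ti' fX Xs] by blast
    have Q'ab: "Q' f = Some f" "Q' b0 = Some b0" using Q'(4) unfolding p_decreasing_def by auto
    have QQ': "Q \<subseteq>\<^sub>m Q'" using map_le_trans[OF QQ1 Q'(1)] .
    have "\<forall>c\<in>E. \<exists>y. eval_word (g # W) P Q' c = Some y \<and> f < y \<and> y < b0 \<and> (\<forall>v\<in>T. v < y)"
    proof
      fix c assume c: "c \<in> E"
      obtain x where x: "eval_word W P Q c = Some x"
        using a(5) c by blast
      have x': "eval_word W P Q' c = Some x"
        using eval_mono_map[OF IE(1) IE(1) IE(2) Q'(2) map_le_refl QQ' x(1)] .
      have xX: "x \<in> X" unfolding X_def using c x(1) by force
      then have xfb: "f < x" "x < b0" using Xf Xp by auto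
      obtain z where z: "Q' z = Some x" using Q'(5) xX by (auto simp: ran_def)
      have az: "f < z" using piso_mono_iff(1)[OF Q'(2) Q'ab(1) z] xfb(1) by simp
      have zb: "z < b0" using piso_mono_iff(1)[OF Q'(2) z Q'ab(2)] xfb(2) by simp
      have "z \<in> dom Q' \<inter> {f<..<b0}" using z az zb by auto
      then have "the (Q' z) < z" using Q'(4) unfolding p_decreasing_def by blast
      then have xz: "x < z" using z by simp
      have zT: "\<forall>t\<in>T. t < z" using Q'(6) z az zb by blast
      have "pinv Q' x = Some z" using pinv_iff[OF Q'(2)] z by simp
      then have "eval_word (g # W) P Q' c = Some z" using x' gi by simp
      then show "\<exists>y. eval_word (g # W) P Q' c = Some y \<and> f < y \<and> y < b0 \<and> (\<forall>v\<in>T. v < y)"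
        using az zb zT by (intro exI[of _ z]) force
    qed
    moreover have "mdir g Q' f b0" using Q'(4) gi unfolding mdir_def posg_def by simp
    ultimately show ?thesis using Q'(1,2,3) by blast
  qed
  then obtain Q' where Q': "Q1 \<subseteq>\<^sub>m Q'" "partial_iso d Q'" "dom Q' \<subseteq> dom Q1 \<union> {f<..<b0}" "mdir g Q' f b0"
     "\<forall>c\<in>E. \<exists>y. eval_word (g # W) P Q' c = Some y \<and> f < y \<and> y < b0 \<and> (\<forall>v\<in>T. v < y)"
    by blast
  have QQ': "Q \<subseteq>\<^sub>m Q'" using map_le_trans[OF QQ1 Q'(1)] .
  have iu: "infU a0 Q' f"
  proof (rule infU_ext[OF iQ1 Q'(1)])
    show "dom Q' \<inter> {..f} \<subseteq> dom Q1"
    proof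
      fix x assume x: "x \<in> dom Q' \<inter> {..f}"
      then have "x \<in> dom Q1 \<union> {f<..<b0}" using Q'(3) by blast
      then show "x \<in> dom Q1" using x by auto
    qed
  qed
  have iP: "infU a0 P b0"
  proof (rule infU_extend[OF a(4) a(2) IE(4)])
    show "p_monotone P a b0" using a(3) unfolding mdir_def p_monotone_def by (auto split: if_splits)
  qed
  have "INV d a0 b0 E (g # W) P Q'"
  proof (rule INV_intro[where a = f])
    show "infU a0 (oth (hd (g # W)) P Q') b0" using iP ns unfolding oth_def by simp
    show "mdir (hd (g # W)) (base (hd (g # W)) P Q') f b0" using Q'(4) ns unfolding base_def by simp
    show "infU a0 (base (hd (g # W)) P Q') f" using iu ns unfolding base_def by simp
    show "\<forall>c\<in>E. \<exists>y. eval_word (g # W) P Q' c = Some y \<and> f < y \<and> y < b0 \<and>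
                    (\<forall>v\<in>ptsI a0 b0 (oth (hd (g # W)) P Q'). v < y)"
      using Q'(5) ns unfolding oth_def T_def by simp
    show "Q' a0 = Some a0" "Q' b0 = Some b0" using map_le_apply[OF QQ'] IE(5,6) by auto
    show "a0 \<le> f" using a0f by simp
  qed (use IE fb0 Q' in auto)
  moreover have "dom Q' \<subseteq> dom Q \<union> {a0<..<b0}"
  proof
    fix x assume "x \<in> dom Q'"
    then have "x \<in> dom Q1 \<union> {f<..<b0}" using Q'(3) by blast
    then show "x \<in> dom Q \<union> {a0<..<b0}" using a0f fb0 unfolding Q1_def by auto
  qed
  ultimately show ?thesis using QQ' map_le_refl[of P] by blast
qed




lemma step_t:
  fixes d :: "'a::linorder \<Rightarrow> 'a \<Rightarrow> rat"
  assumes QU: "QU_prec d" and I: "INV d a0 b0 E W P Q" and g: "g = Gt \<or> g = Gt_inv"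
    and r: "g \<noteq> inv_gen (hd W)"
  shows "\<exists>P' Q'. P \<subseteq>\<^sub>m P' \<and> Q \<subseteq>\<^sub>m Q' \<and> dom P' \<subseteq> dom P \<union> {a0<..<b0} \<and>
                 dom Q' \<subseteq> dom Q \<union> {a0<..<b0} \<and> INV d a0 b0 E (g # W) P' Q'"
proof (cases "sletter (hd W)")
  case True then show ?thesis using step_B[OF QU I g] by blast
next
  case False
  then have "hd W = Gt \<or> hd W = Gt_inv" unfolding sletter_def by (cases "hd W") auto
  then have "hd W = g" using g r by auto
  then show ?thesis using step_A[OF QU I g] by blast
qed

lemma step_any:
  fixes d :: "'a::linorder \<Rightarrow> 'a \<Rightarrow> rat"
  assumes QU: "QU_prec d" and I: "INV d a0 b0 E W P Q" and r: "g \<noteq> inv_gen (hd W)"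
  shows "\<exists>P' Q'. P \<subseteq>\<^sub>m P' \<and> Q \<subseteq>\<^sub>m Q' \<and> dom P' \<subseteq> dom P \<union> {a0<..<b0} \<and>
                 dom Q' \<subseteq> dom Q \<union> {a0<..<b0} \<and> INV d a0 b0 E (g # W) P' Q'"
proof (cases "g = Gt \<or> g = Gt_inv")
  case True then show ?thesis using step_t[OF QU I True r] by blast
next
  case False
  have Wne: "W \<noteq> []" using INV_elim(8)[OF I] .
  have I': "INV d a0 b0 E (map swap_gen W) Q P" using INV_swap[OF I] .
  have g': "swap_gen g = Gt \<or> swap_gen g = Gt_inv" using False by (cases g) auto
  have hdm: "hd (map swap_gen W) = swap_gen (hd W)" using Wne by (cases W) auto
  have r': "swap_gen g \<noteq> inv_gen (hd (map swap_gen W))"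
  proof
    assume "swap_gen g = inv_gen (hd (map swap_gen W))"
    then have "swap_gen g = swap_gen (inv_gen (hd W))" unfolding hdm inv_swap .
    then have "swap_gen (swap_gen g) = swap_gen (swap_gen (inv_gen (hd W)))" by simp
    then show False using r by simp
  qed
  obtain Q' P' where R: "Q \<subseteq>\<^sub>m Q'" "P \<subseteq>\<^sub>m P'" "dom Q' \<subseteq> dom Q \<union> {a0<..<b0}"
    "dom P' \<subseteq> dom P \<union> {a0<..<b0}" "INV d a0 b0 E (swap_gen g # map swap_gen W) Q' P'"
    using step_t[OF QU I' g' r'] by blast
  have "INV d a0 b0 E (map swap_gen (g # W)) Q' P'" using R(5) by simp
  then have "INV d a0 b0 E (g # W) P' Q'" using INV_swap_iff by blast
  then show ?thesis using R by blast
qed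

lemma INV_ext:
  fixes d :: "'a::linorder \<Rightarrow> 'a \<Rightarrow> rat"
  assumes QU: "QU_prec d"
  shows "INV d a0 b0 E W P Q \<Longrightarrow> reduced (u @ W) \<Longrightarrow>
    \<exists>P' Q'. P \<subseteq>\<^sub>m P' \<and> Q \<subseteq>\<^sub>m Q' \<and> dom P' \<subseteq> dom P \<union> {a0<..<b0} \<and>
                 dom Q' \<subseteq> dom Q \<union> {a0<..<b0} \<and> INV d a0 b0 E (u @ W) P' Q'"
proof (induction u)
  case Nil then show ?case by (intro exI[of _ P] exI[of _ Q]) auto
next
  case (Cons g u)
  have r: "reduced (u @ W)" using reduced_ConsD(1)[of g "u @ W"] Cons.prems(2) by simp
  obtain P1 Q1 where 1: "P \<subseteq>\<^sub>m P1" "Q \<subseteq>\<^sub>m Q1" "dom P1 \<subseteq> dom P \<union> {a0<..<b0}"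
    "dom Q1 \<subseteq> dom Q \<union> {a0<..<b0}" "INV d a0 b0 E (u @ W) P1 Q1"
    using Cons.IH[OF Cons.prems(1) r] by blast
  have "u @ W \<noteq> []" using INV_elim(8)[OF 1(5)] .
  then have "g \<noteq> inv_gen (hd (u @ W))" using reduced_ConsD(2)[of g "u @ W"] Cons.prems(2) by simp
  then obtain P2 Q2 where 2: "P1 \<subseteq>\<^sub>m P2" "Q1 \<subseteq>\<^sub>m Q2" "dom P2 \<subseteq> dom P1 \<union> {a0<..<b0}"
    "dom Q2 \<subseteq> dom Q1 \<union> {a0<..<b0}" "INV d a0 b0 E (g # (u @ W)) P2 Q2"
    using step_any[OF QU 1(5)] by blast
  have "P \<subseteq>\<^sub>m P2" "Q \<subseteq>\<^sub>m Q2" using map_le_trans 1(1,2) 2(1,2) by blast+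
  moreover have "dom P2 \<subseteq> dom P \<union> {a0<..<b0}" "dom Q2 \<subseteq> dom Q \<union> {a0<..<b0}"
    using 1(3,4) 2(3,4) by blast+
  ultimately show ?case using 2(5) by auto
qed




lemma restrict_map_le: "p \<subseteq>\<^sub>m P \<Longrightarrow> p |` S \<subseteq>\<^sub>m P |` S"
  by (auto simp: map_le_def restrict_map_def)

context ival begin

lemma fx_finite: "fx m \<Longrightarrow> finite (ptsI a0 b0 m)"
proof -
  assume "fx m"
  then have "finite (dom m)" using piso_fin unfolding fx_def by blast
  moreover then have "finite (ran m)" using finite_ran by blast
  ultimately show ?thesis unfolding ptsI_def by auto
qed

lemma t_letter: "starts_with_t W \<Longrightarrow> W \<noteq> [] \<and> \<not> sletter (hd W) \<and> (posg (hd W) \<longleftrightarrow> hd W = Gt)"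
  unfolding starts_with_t_def sletter_def posg_def by auto

lemma lib_to_INV:
  assumes lib: "liberates_elem d (p |` {a0..b0}) (q |` {a0..b0}) (P |` {a0..b0}) (Q |` {a0..b0}) w"
    and fP: "fx P" and fQ: "fx Q" and fp: "fx p" and fq: "fx q"
  shows "INV d a0 b0 (Ess (p |` {a0..b0}) \<union> Ess (q |` {a0..b0})) w P Q"
proof -
  define E where "E = Ess (p |` {a0..b0}) \<union> Ess (q |` {a0..b0})"
  have Ep: "E = ptsI a0 b0 p \<union> ptsI a0 b0 q" unfolding E_def using restr_Ess fp fq by simp
  have fE: "finite E" unfolding Ep using fx_finite fp fq by simp
  have Es: "E \<subseteq> {a0<..<b0}" unfolding Ep ptsI_def by auto
  have pP: "partial_iso d P" "P a0 = Some a0" "P b0 = Some b0" using fP unfolding fx_def by auto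
  have pQ: "partial_iso d Q" "Q a0 = Some a0" "Q b0 = Some b0" using fQ unfolding fx_def by auto
  have sw: "starts_with_t w" using lib unfolding liberates_elem_def by blast
  note tl = t_letter[OF sw]
  have bo: "base (hd w) P Q = Q" "oth (hd w) P Q = P" using tl unfolding base_def oth_def by auto
  have iP: "infU a0 P b0" using inf_to_infU[OF fP] lib unfolding liberates_elem_def by blast
  have iQ: "infU a0 Q b0" using inf_to_infU[OF fQ] lib unfolding liberates_elem_def by blast
  have mq: "Max (dom (q |` {a0..b0})) = b0" using restr_MinMax[OF fq] by simp
  have v0: "\<exists>a. (\<forall>c \<in> E. a < the (eval_word w (P |` {a0..b0}) (Q |` {a0..b0}) c) \<and>
             the (eval_word w (P |` {a0..b0}) (Q |` {a0..b0}) c) < Max (dom (q |` {a0..b0}))) \<and>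
          (if hd w = Gt then p_increasing (Q |` {a0..b0}) a (Max (dom (q |` {a0..b0})))
           else p_decreasing (Q |` {a0..b0}) a (Max (dom (q |` {a0..b0}))))"
    using lib unfolding liberates_elem_def E_def by blast
  obtain a where a: "\<forall>c \<in> E. a < the (eval_word w (P |` {a0..b0}) (Q |` {a0..b0}) c) \<and>
        the (eval_word w (P |` {a0..b0}) (Q |` {a0..b0}) c) < b0"
     "if hd w = Gt then p_increasing (Q |` {a0..b0}) a b0 else p_decreasing (Q |` {a0..b0}) a b0"
    using v0[unfolded mq] by blast
  have aI: "a \<in> dom (Q |` {a0..b0})" "a < b0" using a(2)
    unfolding p_increasing_def p_decreasing_def by (auto split: if_splits)
  have a0a: "a0 \<le> a" "a \<le> b0" using aI by auto
  have ai: "a \<in> {a0..b0}" "b0 \<in> {a0..b0}" using a0a ab by auto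
  have md: "mdir (hd w) Q a b0"
    using a(2) restr_inc[OF ai] tl unfolding mdir_def by (auto split: if_splits)
  have Qa: "Q a = Some a" using a(2) ai unfolding p_increasing_def p_decreasing_def
    by (auto split: if_splits simp: restrict_map_def)
  have iQa: "infU a0 Q a"
    using infU_restrict[OF iQ Qa a0a(1) a0a(2)] piso_fin[OF pQ(1)] by simp
  have ev: "\<forall>c\<in>E. eval_word w (P |` {a0..b0}) (Q |` {a0..b0}) c = eval_word w P Q c"
  proof
    fix c assume "c \<in> E"
    then have "a0 < c" "c < b0" using Es by auto
    then have "c \<in> {a0..b0}" by (simp add: less_imp_le)
    then show "eval_word w (P |` {a0..b0}) (Q |` {a0..b0}) c = eval_word w P Q c"
      using eval_restr[OF fP fQ] by blast
  qed
  have def0: "\<forall>c\<in>E. eval_word w (P |` {a0..b0}) (Q |` {a0..b0}) c \<noteq> None"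
    using lib unfolding liberates_elem_def E_def by blast
  have def: "\<forall>c\<in>E. eval_word w P Q c \<noteq> None" using def0 ev by simp
  have lower: "\<forall>c\<in>E. \<forall>y. eval_word w P Q c = Some y \<longrightarrow> (\<forall>v\<in>ptsI a0 b0 P. v < y)"
  proof (intro ballI allI impI)
    fix c y v assume c: "c \<in> E" and y: "eval_word w P Q c = Some y" and v: "v \<in> ptsI a0 b0 P"
    have Ene: "E \<noteq> {}" using c by auto
    have mE: "Min E \<in> E" "Min E \<le> c" using fE Ene c by auto
    obtain y0 where y0: "eval_word w P Q (Min E) = Some y0" using def mE(1) by auto
    have "\<forall>x \<in> Ess (P |` {a0..b0}). x < the (eval_word w (P |` {a0..b0}) (Q |` {a0..b0}) (Min E))"
      using lib Ene unfolding liberates_elem_def E_def by blast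
    then have "v < y0" using v restr_Ess[OF fP] ev mE(1) y0 by auto
    also have "y0 \<le> y" using eval_order_le[OF pP(1) pQ(1) y0 y mE(2)] .
    finally show "v < y" .
  qed
  show ?thesis unfolding E_def[symmetric]
  proof (rule INV_intro[where a = a])
    show "\<forall>c\<in>E. \<exists>y. eval_word w P Q c = Some y \<and> a < y \<and> y < b0 \<and>
                    (\<forall>v\<in>ptsI a0 b0 (oth (hd w) P Q). v < y)"
    proof
      fix c assume c: "c \<in> E"
      then obtain y where y: "eval_word w P Q c = Some y" using def by auto
      then show "\<exists>y. eval_word w P Q c = Some y \<and> a < y \<and> y < b0 \<and>
                    (\<forall>v\<in>ptsI a0 b0 (oth (hd w) P Q). v < y)"
        using a(1) ev c lower bo by (intro exI[of _ y]) auto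
    qed
  qed (use pP pQ ab tl fE Es bo iP md iQa a0a aI in auto)
qed

lemma INV_to_lib:
  assumes I: "INV d a0 b0 (Ess (p |` {a0..b0}) \<union> Ess (q |` {a0..b0})) W P Q"
    and sw: "starts_with_t W" and red: "reduced W"
    and fP: "fx P" and fQ: "fx Q" and fp: "fx p" and fq: "fx q"
    and pP: "p \<subseteq>\<^sub>m P" and qQ: "q \<subseteq>\<^sub>m Q"
  shows "liberates_elem d (p |` {a0..b0}) (q |` {a0..b0}) (P |` {a0..b0}) (Q |` {a0..b0}) W"
proof -
  define E where "E = Ess (p |` {a0..b0}) \<union> Ess (q |` {a0..b0})"
  note IE = INV_elim[OF I[folded E_def]]
  note tl = t_letter[OF sw]
  have bo: "base (hd W) P Q = Q" "oth (hd W) P Q = P" using tl unfolding base_def oth_def by auto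
  obtain a where a: "a0 \<le> a" "a < b0" "mdir (hd W) Q a b0" "infU a0 Q a"
     "\<forall>c\<in>E. \<exists>y. eval_word W P Q c = Some y \<and> a < y \<and> y < b0 \<and> (\<forall>v\<in>ptsI a0 b0 P. v < y)"
    using IE(12) bo by auto
  have Es: "E \<subseteq> {a0..b0}"
  proof
    fix x assume "x \<in> E"
    then have "a0 < x" "x < b0" using IE(10) by auto
    then show "x \<in> {a0..b0}" by (simp add: less_imp_le)
  qed
  have ev: "\<forall>c\<in>E. eval_word W (P |` {a0..b0}) (Q |` {a0..b0}) c = eval_word W P Q c"
  proof
    fix c assume "c \<in> E"
    then have "c \<in> {a0..b0}" using Es by auto
    then show "eval_word W (P |` {a0..b0}) (Q |` {a0..b0}) c = eval_word W P Q c"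
      using eval_restr[OF fP fQ] by blast
  qed
  have pQ: "partial_iso d Q" "Q a0 = Some a0" "Q b0 = Some b0" using fQ unfolding fx_def by auto
  have ai: "a \<in> {a0..b0}" "b0 \<in> {a0..b0}" using a(1,2) ab by auto
  have Qa: "Q a = Some a" using a(3) unfolding mdir_def p_increasing_def p_decreasing_def
    by (auto split: if_splits)
  have pm: "p_monotone Q a b0" using a(3) unfolding mdir_def p_monotone_def by (auto split: if_splits)
  have iQ: "infU a0 Q b0" using infU_extend[OF a(4) a(2) pQ(3) pm] .
  have iP: "infU a0 P b0" using IE(11) bo by simp
  have v: "if hd W = Gt then p_increasing (Q |` {a0..b0}) a b0 else p_decreasing (Q |` {a0..b0}) a b0"
    using a(3) restr_inc[OF ai] tl unfolding mdir_def by (auto split: if_splits)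
  have mm: "Min (dom (P |` {a0..b0})) = a0" "Max (dom (P |` {a0..b0})) = b0"
     "Min (dom (Q |` {a0..b0})) = a0" "Max (dom (Q |` {a0..b0})) = b0"
     "Min (dom (p |` {a0..b0})) = a0" "Max (dom (p |` {a0..b0})) = b0"
     "Min (dom (q |` {a0..b0})) = a0" "Max (dom (q |` {a0..b0})) = b0"
    using restr_MinMax fP fQ fp fq by auto
  have defd: "\<forall>c \<in> E. eval_word W (P |` {a0..b0}) (Q |` {a0..b0}) c \<noteq> None" using a(5) ev by fastforce
  have iv: "E \<noteq> {} \<longrightarrow> (\<forall>x \<in> Ess (P |` {a0..b0}). x < the (eval_word W (P |` {a0..b0}) (Q |` {a0..b0}) (Min E)))"
  proof
    assume "E \<noteq> {}"
    then have "Min E \<in> E" using IE(9) by auto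
    then obtain y where y: "eval_word W P Q (Min E) = Some y" "\<forall>v\<in>ptsI a0 b0 P. v < y" using a(5) by blast
    then show "\<forall>x \<in> Ess (P |` {a0..b0}). x < the (eval_word W (P |` {a0..b0}) (Q |` {a0..b0}) (Min E))"
      using ev \<open>Min E \<in> E\<close> restr_Ess[OF fP] by auto
  qed
  have vv: "\<exists>a. (\<forall>c \<in> E. a < the (eval_word W (P |` {a0..b0}) (Q |` {a0..b0}) c) \<and>
             the (eval_word W (P |` {a0..b0}) (Q |` {a0..b0}) c) < Max (dom (q |` {a0..b0}))) \<and>
          (if hd W = Gt then p_increasing (Q |` {a0..b0}) a (Max (dom (q |` {a0..b0})))
           else p_decreasing (Q |` {a0..b0}) a (Max (dom (q |` {a0..b0}))))"
  proof (intro exI[of _ a] conjI)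
    show "\<forall>c \<in> E. a < the (eval_word W (P |` {a0..b0}) (Q |` {a0..b0}) c) \<and>
             the (eval_word W (P |` {a0..b0}) (Q |` {a0..b0}) c) < Max (dom (q |` {a0..b0}))"
      using a(5) ev mm(8) by fastforce
    show "if hd W = Gt then p_increasing (Q |` {a0..b0}) a (Max (dom (q |` {a0..b0})))
           else p_decreasing (Q |` {a0..b0}) a (Max (dom (q |` {a0..b0})))" using v mm(8) by simp
  qed
  have pis: "partial_iso d (P |` {a0..b0})" "partial_iso d (Q |` {a0..b0})"
    using piso_restrict fP fQ unfolding fx_def by blast+
  have le: "p |` {a0..b0} \<subseteq>\<^sub>m P |` {a0..b0}" "q |` {a0..b0} \<subseteq>\<^sub>m Q |` {a0..b0}"
    using restrict_map_le pP qQ by blast+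
  have inf: "informative (P |` {a0..b0})" "informative (Q |` {a0..b0})"
    using infU_to_inf fP fQ iP iQ by blast+
  show ?thesis unfolding liberates_elem_def E_def[symmetric]
    apply (intro conjI)
                  apply (fact pis(1))
                 apply (fact pis(2))
                apply (fact le(1))
               apply (fact le(2))
              apply (fact red)
             apply (fact inf(1))
            apply (fact inf(2))
           apply (simp only: mm)
          apply (simp only: mm)
         apply (simp only: mm)
        apply (simp only: mm)
       apply (fact sw)
      apply (fact defd)
     apply (fact iv)
    apply (fact vv)
    done
qed

end




lemma per_interval:
  fixes d :: "'a::linorder \<Rightarrow> 'a \<Rightarrow> rat"
  assumes QU: "QU_prec d" and ab: "a < b"
    and fa: "p a = Some a" "q a = Some a" and fb: "p b = Some b" "q b = Some b"
    and pP: "p \<subseteq>\<^sub>m P" and qQ: "q \<subseteq>\<^sub>m Q"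
    and piP: "partial_iso d P" and piQ: "partial_iso d Q" and pip: "partial_iso d p" and piq: "partial_iso d q"
    and lib: "liberates_elem d (p |` {a..b}) (q |` {a..b}) (P |` {a..b}) (Q |` {a..b}) w"
    and red: "reduced (u @ w)" and sw: "starts_with_t (u @ w)"
  shows "\<exists>P' Q'. P \<subseteq>\<^sub>m P' \<and> Q \<subseteq>\<^sub>m Q' \<and> partial_iso d P' \<and> partial_iso d Q' \<and>
     dom P' \<subseteq> dom P \<union> {a<..<b} \<and> dom Q' \<subseteq> dom Q \<union> {a<..<b} \<and>
     liberates_elem d (p |` {a..b}) (q |` {a..b}) (P' |` {a..b}) (Q' |` {a..b}) (u @ w)"
proof -
  interpret ival d a b using ab by unfold_locales
  have fx: "fx P" "fx Q" "fx p" "fx q"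
    unfolding fx_def using fa fb piP piQ pip piq map_le_apply[OF pP] map_le_apply[OF qQ] by auto
  have I: "INV d a b (Ess (p |` {a..b}) \<union> Ess (q |` {a..b})) w P Q"
    using lib_to_INV[OF lib fx] .
  obtain P' Q' where R: "P \<subseteq>\<^sub>m P'" "Q \<subseteq>\<^sub>m Q'" "dom P' \<subseteq> dom P \<union> {a<..<b}"
    "dom Q' \<subseteq> dom Q \<union> {a<..<b}" "INV d a b (Ess (p |` {a..b}) \<union> Ess (q |` {a..b})) (u @ w) P' Q'"
    using INV_ext[OF QU I red] by blast
  have pi': "partial_iso d P'" "partial_iso d Q'" using INV_elim(1,2)[OF R(5)] by auto
  have fx': "fx P'" "fx Q'"
    unfolding fx_def using pi' INV_elim(3-6)[OF R(5)] by auto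
  have le: "p \<subseteq>\<^sub>m P'" "q \<subseteq>\<^sub>m Q'" using map_le_trans pP qQ R(1,2) by blast+
  have "liberates_elem d (p |` {a..b}) (q |` {a..b}) (P' |` {a..b}) (Q' |` {a..b}) (u @ w)"
    using INV_to_lib[OF R(5) sw red fx' fx(3,4) le] .
  then show ?thesis using R pi' by blast
qed

definition consec :: "'a::linorder set \<Rightarrow> ('a \<times> 'a) set" where
  "consec Fx = {(a,b). a \<in> Fx \<and> b \<in> Fx \<and> a < b \<and> (\<forall>c\<in>Fx. \<not> (a < c \<and> c < b))}"

lemma consec_disj:
  fixes a :: "'a::linorder"
  assumes "(a,b) \<in> consec Fx" "(a',b') \<in> consec Fx" "a \<le> x" "x \<le> b" "a' < x" "x < b'"
  shows "a = a' \<and> b = b'"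
proof -
  have c: "a \<in> Fx" "b \<in> Fx" "a < b" "\<forall>c\<in>Fx. \<not> (a < c \<and> c < b)"
    "a' \<in> Fx" "b' \<in> Fx" "a' < b'" "\<forall>c\<in>Fx. \<not> (a' < c \<and> c < b')"
    using assms(1,2) unfolding consec_def by auto
  have eqa: "a = a'"
  proof (rule ccontr)
    assume "a \<noteq> a'"
    then consider "a' < a" | "a < a'" by fastforce
    then show False
    proof cases
      case 1 then show False using c(1,8) assms(3,6) by force
    next
      case 2 then show False using c(4,5) assms(4,5) by force
    qed
  qed
  have 2: "b = b'"
  proof (rule ccontr)
    assume "b \<noteq> b'"
    then consider "b < b'" | "b' < b" by fastforce
    then show False
    proof cases
      case 1 then show False using c(2,3,8) eqa by force
    next
      case 2 then show False using c(4,6,7) eqa by force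
    qed
  qed
  show ?thesis using eqa 2 by simp
qed

lemma restr_eq:
  assumes "p' \<subseteq>\<^sub>m P" "dom P \<inter> S \<subseteq> dom p'"
  shows "P |` S = p' |` S"
proof
  fix x show "(P |` S) x = (p' |` S) x"
  proof (cases "x \<in> S \<and> x \<in> dom P")
    case True
    then have "x \<in> dom p'" using assms(2) by auto
    then obtain v where "p' x = Some v" by auto
    then show ?thesis using map_le_apply[OF assms(1)] True by auto
  next
    case False
    then show ?thesis
    proof (cases "x \<in> S")
      case True
      then have "P x = None" using False by auto
      moreover have "p' x = None"
      proof (rule ccontr)
        assume "p' x \<noteq> None"
        then obtain v where "p' x = Some v" by auto
        then have "P x = Some v" using map_le_apply[OF assms(1)] by auto
        then show False using \<open>P x = None\<close> by simp
      qed
      ultimately show ?thesis using True by (simp add: restrict_map_def)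
    next
      case False then show ?thesis by simp
    qed
  qed
qed




lemma dom_between:
  fixes A B U :: "'a::linorder set"
  assumes "finite B" "A \<subseteq> B" "B \<subseteq> A \<union> U" "\<forall>x\<in>U. \<exists>a\<in>A. \<exists>b\<in>A. a < x \<and> x < b"
  shows "Min B = Min A \<and> Max B = Max A"
proof (cases "A = {}")
  case True
  then have "U = {}" using assms(4) by auto
  then have "B = {}" using assms(3) True by auto
  then show ?thesis using True by simp
next
  case False
  have fA: "finite A" using assms(1,2) finite_subset by blast
  have Bne: "B \<noteq> {}" using False assms(2) by auto
  have "Min B = Min A"
  proof (rule antisym)
    show "Min B \<le> Min A" using assms(1,2) False Bne by (meson Min_antimono)
    have "Min B \<in> B" using assms(1) Bne by simp
    then have "Min B \<in> A \<or> Min B \<in> U" using assms(3) by auto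
    then show "Min A \<le> Min B"
    proof
      assume "Min B \<in> A" then show ?thesis using fA by simp
    next
      assume "Min B \<in> U"
      then obtain a where "a \<in> A" "a < Min B" using assms(4) by blast
      then have "a \<in> B" using assms(2) by auto
      then have "Min B \<le> a" using assms(1) by simp
      then show ?thesis using \<open>a < Min B\<close> by simp
    qed
  qed
  moreover have "Max B = Max A"
  proof (rule antisym)
    show "Max A \<le> Max B" using assms(1,2) False by (meson Max_mono)
    have "Max B \<in> B" using assms(1) Bne by simp
    then have "Max B \<in> A \<or> Max B \<in> U" using assms(3) by auto
    then show "Max B \<le> Max A"
    proof
      assume "Max B \<in> A" then show ?thesis using fA by simp
    next
      assume "Max B \<in> U"
      then obtain b where "b \<in> A" "Max B < b" using assms(4) by blast
      then have "b \<in> B" using assms(2) by auto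
      then have "b \<le> Max B" using assms(1) by simp
      then show ?thesis using \<open>Max B < b\<close> by simp
    qed
  qed
  ultimately show ?thesis by simp
qed

lemma main_p:
  fixes d :: "'a::linorder \<Rightarrow> 'a \<Rightarrow> rat"
  assumes QU: "QU_prec d" and pip: "partial_iso d p" and piq: "partial_iso d q"
    and lib: "liberates_p d p q p' q' w" and red: "reduced (u @ w)" and uu: "u = [] \<or> starts_with_t u"
  shows "\<exists>p'' q''. partial_iso d p'' \<and> partial_iso d q'' \<and> p' \<subseteq>\<^sub>m p'' \<and> q' \<subseteq>\<^sub>m q'' \<and>
                  liberates_p d p q p'' q'' (u @ w)"
proof (cases "u = []")
  case True
  have "partial_iso d p'" "partial_iso d q'" using lib unfolding liberates_p_def by auto
  then show ?thesis using lib True by (intro exI[of _ p'] exI[of _ q']) auto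
next
  case False
  then have swu: "starts_with_t u" using uu by simp
  then have sw: "starts_with_t (u @ w)" unfolding starts_with_t_def by (cases u) auto
  have L: "partial_iso d p'" "partial_iso d q'" "p \<subseteq>\<^sub>m p'" "q \<subseteq>\<^sub>m q'"
    "Min (dom p') = Min (dom p)" "Min (dom q') = Min (dom q)"
    "Max (dom p') = Max (dom p)" "Max (dom q') = Max (dom q)"
    using lib unfolding liberates_p_def by blast+
  have LE: "\<forall>a b. a \<in> Fix p \<inter> Fix q \<and> b \<in> Fix p \<inter> Fix q \<and> a < b \<and>
            (\<forall>c \<in> Fix p \<inter> Fix q. \<not> (a < c \<and> c < b)) \<longrightarrow>
        liberates_elem d (p |` {a..b}) (q |` {a..b}) (p' |` {a..b}) (q' |` {a..b}) w"
    using lib unfolding liberates_p_def by blast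
  define Fx where "Fx = Fix p \<inter> Fix q"
  define C where "C = consec Fx"
  have FxD: "p x = Some x" "q x = Some x" if "x \<in> Fx" for x
    using that unfolding Fx_def Fix_def by auto
  have Fxdom: "Fx \<subseteq> dom p'"
  proof
    fix x assume "x \<in> Fx"
    then have "p' x = Some x" using FxD map_le_apply[OF L(3)] by blast
    then show "x \<in> dom p'" by auto
  qed
  have Fxdomq: "Fx \<subseteq> dom q'"
  proof
    fix x assume "x \<in> Fx"
    then have "q' x = Some x" using FxD map_le_apply[OF L(4)] by blast
    then show "x \<in> dom q'" by auto
  qed
  have fFx: "finite Fx" using Fxdom piso_fin[OF L(1)] finite_subset by blast
  have fC: "finite C"
  proof -
    have "C \<subseteq> Fx \<times> Fx" unfolding C_def consec_def by auto
    then show ?thesis using fFx finite_subset by blast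
  qed
  have Cmem: "a \<in> Fx \<and> b \<in> Fx \<and> a < b \<and> (\<forall>c\<in>Fx. \<not> (a < c \<and> c < b))" if "(a,b) \<in> C" for a b
    using that unfolding C_def consec_def by auto
  define U :: "('a \<times> 'a) set \<Rightarrow> 'a set" where "U K = (\<Union>(a,b)\<in>K. {a<..<b})" for K
  have claim: "K \<subseteq> C \<longrightarrow> (\<exists>P Q. partial_iso d P \<and> partial_iso d Q \<and> p' \<subseteq>\<^sub>m P \<and> q' \<subseteq>\<^sub>m Q \<and>
     dom P \<subseteq> dom p' \<union> U K \<and> dom Q \<subseteq> dom q' \<union> U K \<and>
     (\<forall>(a,b)\<in>K. liberates_elem d (p |` {a..b}) (q |` {a..b}) (P |` {a..b}) (Q |` {a..b}) (u @ w)))"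
    if fK: "finite K" for K
    using fK
  proof (induction K rule: finite_induct)
    case empty
    show ?case unfolding U_def using L(1,2) by (intro impI exI[of _ p'] exI[of _ q']) auto
  next
    case (insert ab K)
    obtain a b where ab: "ab = (a,b)" by fastforce
    show ?case
    proof
      assume sub: "insert ab K \<subseteq> C"
      then obtain P Q where PQ: "partial_iso d P" "partial_iso d Q" "p' \<subseteq>\<^sub>m P" "q' \<subseteq>\<^sub>m Q"
        "dom P \<subseteq> dom p' \<union> U K" "dom Q \<subseteq> dom q' \<union> U K"
        "\<forall>(a,b)\<in>K. liberates_elem d (p |` {a..b}) (q |` {a..b}) (P |` {a..b}) (Q |` {a..b}) (u @ w)"
        using insert.IH by blast
      have abC: "(a,b) \<in> C" using sub ab by auto
      have abK: "(a,b) \<notin> K" using insert.hyps(2) ab by simp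
      note cm = Cmem[OF abC]
      have disj: "\<not> (a \<le> x \<and> x \<le> b)" if xU: "x \<in> U K" for x
      proof
        assume x: "a \<le> x \<and> x \<le> b"
        obtain a' b' where a'b': "(a',b') \<in> K" "a' < x" "x < b'" using xU unfolding U_def by auto
        have "(a',b') \<in> C" using a'b'(1) sub by auto
        then have "a = a' \<and> b = b'" using consec_disj[of a b Fx a' b' x] abC a'b' x unfolding C_def by auto
        then show False using a'b'(1) abK by auto
      qed
      have rP: "P |` {a..b} = p' |` {a..b}"
      proof (rule restr_eq[OF PQ(3)])
        show "dom P \<inter> {a..b} \<subseteq> dom p'" using PQ(5) disj by fastforce
      qed
      have rQ: "Q |` {a..b} = q' |` {a..b}"
      proof (rule restr_eq[OF PQ(4)])
        show "dom Q \<inter> {a..b} \<subseteq> dom q'" using PQ(6) disj by fastforce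
      qed
      have libw: "liberates_elem d (p |` {a..b}) (q |` {a..b}) (P |` {a..b}) (Q |` {a..b}) w"
        unfolding rP rQ using LE cm unfolding Fx_def by blast
      have pP: "p \<subseteq>\<^sub>m P" "q \<subseteq>\<^sub>m Q" using map_le_trans L(3,4) PQ(3,4) by blast+
      obtain P2 Q2 where R: "P \<subseteq>\<^sub>m P2" "Q \<subseteq>\<^sub>m Q2" "partial_iso d P2" "partial_iso d Q2"
        "dom P2 \<subseteq> dom P \<union> {a<..<b}" "dom Q2 \<subseteq> dom Q \<union> {a<..<b}"
        "liberates_elem d (p |` {a..b}) (q |` {a..b}) (P2 |` {a..b}) (Q2 |` {a..b}) (u @ w)"
        using per_interval[OF QU _ FxD(1) FxD(2) FxD(1) FxD(2) pP(1) pP(2) PQ(1) PQ(2) pip piq libw red sw]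
          cm by blast
      have keep: "P2 |` {a'..b'} = P |` {a'..b'} \<and> Q2 |` {a'..b'} = Q |` {a'..b'}" if a'K: "(a',b') \<in> K" for a' b'
      proof -
        have a'C: "(a',b') \<in> C" using a'K sub by auto
        have nx: "\<not> (a' \<le> x \<and> x \<le> b')" if xab: "a < x" "x < b" for x
        proof
          assume "a' \<le> x \<and> x \<le> b'"
          then have "a' = a \<and> b' = b" using consec_disj[of a' b' Fx a b x] a'C abC xab unfolding C_def by auto
          then show False using \<open>(a',b') \<in> K\<close> abK by auto
        qed
        have "P2 |` {a'..b'} = P |` {a'..b'}"
        proof (rule restr_eq[OF R(1)])
          show "dom P2 \<inter> {a'..b'} \<subseteq> dom P" using R(5) nx by fastforce
        qed
        moreover have "Q2 |` {a'..b'} = Q |` {a'..b'}"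
        proof (rule restr_eq[OF R(2)])
          show "dom Q2 \<inter> {a'..b'} \<subseteq> dom Q" using R(6) nx by fastforce
        qed
        ultimately show ?thesis by simp
      qed
      have all: "\<forall>(a',b')\<in>insert ab K. liberates_elem d (p |` {a'..b'}) (q |` {a'..b'}) (P2 |` {a'..b'}) (Q2 |` {a'..b'}) (u @ w)"
      proof
        fix x assume "x \<in> insert ab K"
        then show "case x of (a', b') \<Rightarrow> liberates_elem d (p |` {a'..b'}) (q |` {a'..b'}) (P2 |` {a'..b'}) (Q2 |` {a'..b'}) (u @ w)"
        proof
          assume "x = ab" then show ?thesis using R(7) ab by simp
        next
          assume xK: "x \<in> K"
          obtain a' b' where x: "x = (a',b')" by fastforce
          then show ?thesis using keep[of a' b'] xK PQ(7) by auto
        qed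
      qed
      have UK: "U (insert ab K) = {a<..<b} \<union> U K" unfolding U_def ab by auto
      have "dom P2 \<subseteq> dom p' \<union> U (insert ab K)" using R(5) PQ(5) UK by blast
      moreover have "dom Q2 \<subseteq> dom q' \<union> U (insert ab K)" using R(6) PQ(6) UK by blast
      moreover have "p' \<subseteq>\<^sub>m P2" "q' \<subseteq>\<^sub>m Q2" using map_le_trans PQ(3,4) R(1,2) by blast+
      ultimately show "\<exists>P Q. partial_iso d P \<and> partial_iso d Q \<and> p' \<subseteq>\<^sub>m P \<and> q' \<subseteq>\<^sub>m Q \<and>
         dom P \<subseteq> dom p' \<union> U (insert ab K) \<and> dom Q \<subseteq> dom q' \<union> U (insert ab K) \<and>
         (\<forall>(a,b)\<in>insert ab K. liberates_elem d (p |` {a..b}) (q |` {a..b}) (P |` {a..b}) (Q |` {a..b}) (u @ w))"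
        using R(3,4) all by blast
    qed
  qed
  obtain P Q where PQ: "partial_iso d P" "partial_iso d Q" "p' \<subseteq>\<^sub>m P" "q' \<subseteq>\<^sub>m Q"
        "dom P \<subseteq> dom p' \<union> U C" "dom Q \<subseteq> dom q' \<union> U C"
        "\<forall>(a,b)\<in>C. liberates_elem d (p |` {a..b}) (q |` {a..b}) (P |` {a..b}) (Q |` {a..b}) (u @ w)"
    using claim[OF fC] by blast
  have Ubet: "\<forall>x\<in>U C. \<exists>a\<in>dom p'. \<exists>b\<in>dom p'. a < x \<and> x < b"
  proof
    fix x assume "x \<in> U C"
    then obtain a b where "(a,b) \<in> C" "a < x" "x < b" unfolding U_def by auto
    then show "\<exists>a\<in>dom p'. \<exists>b\<in>dom p'. a < x \<and> x < b" using Cmem Fxdom by blast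
  qed
  have Ubetq: "\<forall>x\<in>U C. \<exists>a\<in>dom q'. \<exists>b\<in>dom q'. a < x \<and> x < b"
  proof
    fix x assume "x \<in> U C"
    then obtain a b where "(a,b) \<in> C" "a < x" "x < b" unfolding U_def by auto
    then show "\<exists>a\<in>dom q'. \<exists>b\<in>dom q'. a < x \<and> x < b" using Cmem Fxdomq by blast
  qed
  have mmP: "Min (dom P) = Min (dom p') \<and> Max (dom P) = Max (dom p')"
    using dom_between[OF piso_fin[OF PQ(1)] map_le_implies_dom_le[OF PQ(3)] PQ(5) Ubet] .
  have mmQ: "Min (dom Q) = Min (dom q') \<and> Max (dom Q) = Max (dom q')"
    using dom_between[OF piso_fin[OF PQ(2)] map_le_implies_dom_le[OF PQ(4)] PQ(6) Ubetq] .
  have "liberates_p d p q P Q (u @ w)"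
    unfolding liberates_p_def
  proof (intro conjI allI impI)
    show "p \<subseteq>\<^sub>m P" "q \<subseteq>\<^sub>m Q" using map_le_trans L(3,4) PQ(3,4) by blast+
    show "Min (dom P) = Min (dom p)" "Max (dom P) = Max (dom p)" using mmP L by simp_all
    show "Min (dom Q) = Min (dom q)" "Max (dom Q) = Max (dom q)" using mmQ L by simp_all
    fix a b
    assume "a \<in> Fix p \<inter> Fix q \<and> b \<in> Fix p \<inter> Fix q \<and> a < b \<and> (\<forall>c\<in>Fix p \<inter> Fix q. \<not> (a < c \<and> c < b))"
    then have "(a,b) \<in> C" unfolding C_def consec_def Fx_def by auto
    then show "liberates_elem d (p |` {a..b}) (q |` {a..b}) (P |` {a..b}) (Q |` {a..b}) (u @ w)"
      using PQ(7) by blast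
  qed (use PQ red in auto)
  then show ?thesis using PQ by blast
qed

lemma reduced_swap: "reduced (map swap_gen L) \<longleftrightarrow> reduced L"
proof -
  have e: "(swap_gen x = inv_gen (swap_gen y)) \<longleftrightarrow> (x = inv_gen y)" for x y
    by (cases x; cases y) auto
  show ?thesis unfolding reduced_def using e by simp
qed


theorem lemma5p3:
  fixes d :: "'a::linorder \<Rightarrow> 'a \<Rightarrow> rat"
    and p q p' q' :: "'a \<rightharpoonup> 'a"
    and w u :: "gen list"
  assumes "QU_prec d"
    and "pw_elementary d p q"
    and "reduced u"
    and "reduced (u @ w)"
  shows "(liberates_p d p q p' q' w \<and> (u = [] \<or> starts_with_t u) \<longrightarrow>
            (\<exists>p'' q''. partial_iso d p'' \<and> partial_iso d q'' \<and> p' \<subseteq>\<^sub>m p'' \<and> q' \<subseteq>\<^sub>m q'' \<and>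
                       liberates_p d p q p'' q'' (u @ w)))
       \<and> (liberates_q d p q p' q' w \<and> (u = [] \<or> starts_with_s u) \<longrightarrow>
            (\<exists>p'' q''. partial_iso d p'' \<and> partial_iso d q'' \<and> p' \<subseteq>\<^sub>m p'' \<and> q' \<subseteq>\<^sub>m q'' \<and>
                       liberates_q d p q p'' q'' (u @ w)))"
proof -
  have QU: "QU_prec d" by (rule assms(1))
  have pip: "partial_iso d p" and piq: "partial_iso d q"
    using assms(2) unfolding pw_elementary_def by auto
  show ?thesis
  proof (intro conjI impI)
    assume h: "liberates_p d p q p' q' w \<and> (u = [] \<or> starts_with_t u)"
    show "\<exists>p'' q''. partial_iso d p'' \<and> partial_iso d q'' \<and> p' \<subseteq>\<^sub>m p'' \<and> q' \<subseteq>\<^sub>m q'' \<and>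
                       liberates_p d p q p'' q'' (u @ w)"
      using main_p[OF QU pip piq _ assms(4)] h by blast
  next
    assume h: "liberates_q d p q p' q' w \<and> (u = [] \<or> starts_with_s u)"
    have lib': "liberates_p d q p q' p' (map swap_gen w)" using h unfolding liberates_q_def by simp
    have red': "reduced (map swap_gen u @ map swap_gen w)"
      using assms(4) reduced_swap[of "u @ w"] by simp
    have uu': "map swap_gen u = [] \<or> starts_with_t (map swap_gen u)"
    proof (cases u)
      case Nil then show ?thesis by simp
    next
      case (Cons g v)
      then have "g = Gs \<or> g = Gs_inv" using h unfolding starts_with_s_def by auto
      then show ?thesis using Cons unfolding starts_with_t_def by auto
    qed
    obtain q'' p'' where R: "partial_iso d q''" "partial_iso d p''" "q' \<subseteq>\<^sub>m q''" "p' \<subseteq>\<^sub>m p''"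
      "liberates_p d q p q'' p'' (map swap_gen u @ map swap_gen w)"
      using main_p[OF QU piq pip lib' red' uu'] by blast
    have "liberates_q d p q p'' q'' (u @ w)" unfolding liberates_q_def using R(5) by simp
    then show "\<exists>p'' q''. partial_iso d p'' \<and> partial_iso d q'' \<and> p' \<subseteq>\<^sub>m p'' \<and> q' \<subseteq>\<^sub>m q'' \<and>
                       liberates_q d p q p'' q'' (u @ w)"
      using R by blast
  qed
qed

end
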